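(* Let $\mathcal{G}$ be a multi-player Markov game (as defined in the context) that admits a single controller $c \in [n]$ and satisfies the following condition: for every $T\in\mathbb{N}$ and every sequence of stationary product policies $(\pi^{(t)})_{1\le t\le T}$ there exists a stationary product policy $\pi^\star=(\pi^\star_1,\dots,\pi^\star_n)$ (which may depend on the sequence) such that $$\sum_{t=1}^T\sum_{i=1}^n V_i^{\pi^\star_i,\pi^{(t)}_{-i}}(\rho)-\sum_{t=1}^T\sum_{i=1}^n V_i^{\pi^{(t)}}(\rho)\ \ge\ 0 .$$ Run the rescaled optimistic gradient descent dynamics (defined in the context) with the operator $F_{\mathcal{G}}$ and the rescaling $A$ described in the context. Then for every $\epsilon>0$, with a suitable learning rate $\eta>0$, after $T = \frac{1}{\epsilon^2}\cdot \mathrm{poly}\big(n,\sum_{i=1}^n|\mathcal{A}_i|,|\mathcal{S}|,1/\zeta, C_{\mathcal{G}}, 1/\min_{s\in\mathcal{S}}\rho(s)\big)$ iterations, some iterate $x^{(t)}$, $t\in\{1,\dots,T\}$, is (the direct parameterization of) a stationary $\epsilon$-Nash equilibrium of $\mathcal{G}$.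
   Context: A multi-player Markov game $\mathcal{G}$ consists of: players $[n]=\{1,\dots,n\}$; a finite state space $\mathcal{S}$; finite nonempty action sets $\mathcal{A}_i$ with joint action set $\mathcal{A}=\prod_i\mathcal{A}_i$; transition probabilities $\mathbb{P}(s'\mid s,a)\ge 0$ with $\zeta:=\min_{(s,a)}(1-\sum_{s'}\mathbb{P}(s'\mid s,a))>0$ (the missing mass is the probability that the game terminates); rewards $R_i:\mathcal{S}\times\mathcal{A}\to[-1,1]$; an initial distribution $\rho\in\Delta(\mathcal{S})$ with full support. A stationary policy of player $i$ is $\pi_i:\mathcal{S}\to\Delta(\mathcal{A}_i)$, directly parameterized by $x_i\in\mathcal{X}_i:=\Delta(\mathcal{A}_i)^{\mathcal{S}}$ via $x_{i,s}[a_i]=\pi_i(a_i\mid s)$; $\mathcal{X}=\prod_i\mathcal{X}_i$. The value is $V_i^{\pi}(s)=\mathbb{E}_\pi[\sum_{h=0}^H R_i(s_h,a_h)\mid s_0=s]$, where $H$ is the last step before termination, and $V_i^\pi(\rho)=\mathbb{E}_{s\sim\rho}V_i^\pi(s)$. For a (possibly correlated) policy $\mu_{-i}$ of the others, $V_i^{\dagger,\mu_{-i}}(\rho)$ is the value of a best response of player $i$ (a stationary best response exists). A stationary product policy $\pi$ is an $\epsilon$-Nash equilibrium if $\max_i\{V_i^{\dagger,\pi_{-i}}(\rho)-V_i^{\pi}(\rho)\}\le\epsilon$. The game has a single controller $c$ if $\mathbb{P}(\cdot\mid s,a)$ depends on $a$ only through $a_c$. Unnormalized visitation: $\tilde d^{\pi}_\rho[s]=\mathbb{E}_{s_0\sim\rho}\sum_{h\ge0}\mathbb{P}^\pi(s_h=s\mid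 s_0)$; normalized $d^\pi_\rho=\tilde d^\pi_\rho/\sum_{s}\tilde d^\pi_\rho[s]$. With a single controller, $\tilde d^\pi_\rho$ depends only on $\pi_c$ and is written $\tilde d^{\pi_c}_\rho$. Operator: $F_{\mathcal{G}}(x)=-(\nabla_{x_1}V_1^{\pi}(\rho),\dots,\nabla_{x_n}V_n^{\pi}(\rho))$. Rescaling $A(x)$ (same shape as $x$): for $i\ne c$ all coordinates equal $1$; for $i=c$ the coordinate $(s,a_c)$ equals $1/\tilde d^{\pi_c}_\rho[s]$. Rescaled optimistic gradient descent with learning rate $\eta$: starting from arbitrary $x^{(0)}=\hat x^{(1)}\in\mathcal{X}$, for $t\ge1$, $x^{(t)}=\Pi_{\mathcal{X}}(\hat x^{(t)}-\eta A(x^{(t-1)})\circ F(x^{(t-1)}))$ and $\hat x^{(t+1)}=\Pi_{\mathcal{X}}(\hat x^{(t)}-\eta A(x^{(t)})\circ F(x^{(t)}))$, where $\Pi_{\mathcal{X}}$ is Euclidean projection and $\circ$ is the coordinatewise product. Distribution mismatch coefficient: $C_{\mathcal{G}}=\max_{i}\max_{\pi_{-i}}\min_{\pi^\star_i\in\Pi^\star_i(\pi_{-i})}\|d_\rho^{\pi^\star_i,\pi_{-i}}/\rho\|_\infty$, where $\Pi^\star_i(\pi_{-i})$ is the set of stationary best responses of $i$ to $\pi_{-i}$ and the ratio is coordinatewise. *)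

theory Defs
  imports "HOL-Analysis.Analysis"
begin

text \<open>Players are 0..<nplayers, states form a finite
  set, player i has action set acts i; a joint action is an element of
  PiE {..<n} acts. trans s a s' is the transition probability (substochastic; missing
  mass = termination), rew i s a the reward of player i, init the initial distribution.\<close>

record ('s, 'a) mgame =
  nplayers :: nat
  states   :: "'s set"
  acts     :: "nat \<Rightarrow> 'a set"
  trans    :: "'s \<Rightarrow> (nat \<Rightarrow> 'a) \<Rightarrow> 's \<Rightarrow> real"
  rew      :: "nat \<Rightarrow> 's \<Rightarrow> (nat \<Rightarrow> 'a) \<Rightarrow> real"
  init     :: "'s \<Rightarrow> real"

definition joint :: "('s, 'a) mgame \<Rightarrow> (nat \<Rightarrow> 'a) set" where
  "joint G = PiE {..<nplayers G} (acts G)"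

definition zeta :: "('s, 'a) mgame \<Rightarrow> real" where
  "zeta G = Min {1 - (\<Sum>s'\<in>states G. trans G s a s') | s a. s \<in> states G \<and> a \<in> joint G}"

definition wf_game :: "('s, 'a) mgame \<Rightarrow> bool" where
  "wf_game G \<longleftrightarrow>
     nplayers G \<ge> 1 \<and> finite (states G) \<and> states G \<noteq> {} \<and>
     (\<forall>i<nplayers G. finite (acts G i) \<and> acts G i \<noteq> {}) \<and>
     (\<forall>s\<in>states G. \<forall>a\<in>joint G. \<forall>s'\<in>states G. trans G s a s' \<ge> 0) \<and>
     zeta G > 0 \<and>
     (\<forall>i<nplayers G. \<forall>s\<in>states G. \<forall>a\<in>joint G. -1 \<le> rew G i s a \<and> rew G i s a \<le> 1) \<and>
     (\<forall>s\<in>states G. init G s > 0) \<and> (\<Sum>s\<in>states G. init G s) = 1"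

definition single_controller :: "('s, 'a) mgame \<Rightarrow> nat \<Rightarrow> bool" where
  "single_controller G c \<longleftrightarrow> c < nplayers G \<and>
     (\<forall>s\<in>states G. \<forall>a\<in>joint G. \<forall>b\<in>joint G. a c = b c \<longrightarrow>
        (\<forall>s'\<in>states G. trans G s a s' = trans G s b s'))"

text \<open>Direct parameterization: x i s a = pi_i(a | s). Coordinates outside the valid
  index set are fixed to 0.\<close>

type_synonym ('s, 'a) pol = "nat \<Rightarrow> 's \<Rightarrow> 'a \<Rightarrow> real"

definition pol_i :: "('s, 'a) mgame \<Rightarrow> nat \<Rightarrow> ('s \<Rightarrow> 'a \<Rightarrow> real) \<Rightarrow> bool" where
  "pol_i G i y \<longleftrightarrow>
     (\<forall>s\<in>states G. (\<forall>a\<in>acts G i. y s a \<ge> 0) \<and> (\<Sum>a\<in>acts G i. y s a) = 1) \<and>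
     (\<forall>s a. s \<notin> states G \<or> a \<notin> acts G i \<longrightarrow> y s a = 0)"

definition polX :: "('s, 'a) mgame \<Rightarrow> ('s, 'a) pol set" where
  "polX G = {x. (\<forall>i<nplayers G. pol_i G i (x i)) \<and> (\<forall>i\<ge>nplayers G. x i = (\<lambda>_ _. 0))}"

definition prob_joint :: "('s, 'a) mgame \<Rightarrow> ('s, 'a) pol \<Rightarrow> 's \<Rightarrow> (nat \<Rightarrow> 'a) \<Rightarrow> real" where
  "prob_joint G x s a = (\<Prod>j<nplayers G. x j s (a j))"

definition Ptrans :: "('s, 'a) mgame \<Rightarrow> ('s, 'a) pol \<Rightarrow> 's \<Rightarrow> 's \<Rightarrow> real" where
  "Ptrans G x s s' = (\<Sum>a\<in>joint G. prob_joint G x s a * trans G s a s')"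

definition rew_pol :: "('s, 'a) mgame \<Rightarrow> ('s, 'a) pol \<Rightarrow> nat \<Rightarrow> 's \<Rightarrow> real" where
  "rew_pol G x i s = (\<Sum>a\<in>joint G. prob_joint G x s a * rew G i s a)"

text \<open>mpow G x h s s' = probability that the game is still running at step h and is in
  state s', starting from s.\<close>

fun mpow :: "('s, 'a) mgame \<Rightarrow> ('s, 'a) pol \<Rightarrow> nat \<Rightarrow> 's \<Rightarrow> 's \<Rightarrow> real" where
  "mpow G x 0 s s' = (if s = s' then 1 else 0)"
| "mpow G x (Suc h) s s' = (\<Sum>s''\<in>states G. mpow G x h s s'' * Ptrans G x s'' s')"

definition Val :: "('s, 'a) mgame \<Rightarrow> ('s, 'a) pol \<Rightarrow> nat \<Rightarrow> 's \<Rightarrow> real" where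
  "Val G x i s = (\<Sum>h. \<Sum>s'\<in>states G. mpow G x h s s' * rew_pol G x i s')"

definition Vrho :: "('s, 'a) mgame \<Rightarrow> ('s, 'a) pol \<Rightarrow> nat \<Rightarrow> real" where
  "Vrho G x i = (\<Sum>s\<in>states G. init G s * Val G x i s)"

text \<open>Best-response value V_i^{dagger, pi_{-i}}(rho): a stationary best response exists.\<close>

definition BRval :: "('s, 'a) mgame \<Rightarrow> ('s, 'a) pol \<Rightarrow> nat \<Rightarrow> real" where
  "BRval G x i = Sup ((\<lambda>y. Vrho G (x(i := y)) i) ` {y. pol_i G i y})"

definition is_eps_NE :: "('s, 'a) mgame \<Rightarrow> real \<Rightarrow> ('s, 'a) pol \<Rightarrow> bool" where
  "is_eps_NE G \<epsilon> x \<longleftrightarrow> x \<in> polX G \<and> (\<forall>i<nplayers G. BRval G x i - Vrho G x i \<le> \<epsilon>)"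

definition dvis :: "('s, 'a) mgame \<Rightarrow> ('s, 'a) pol \<Rightarrow> 's \<Rightarrow> real" where
  "dvis G x s = (\<Sum>h. \<Sum>s0\<in>states G. init G s0 * mpow G x h s0 s)"

definition dnorm :: "('s, 'a) mgame \<Rightarrow> ('s, 'a) pol \<Rightarrow> 's \<Rightarrow> real" where
  "dnorm G x s = dvis G x s / (\<Sum>s'\<in>states G. dvis G x s')"

definition BRset :: "('s, 'a) mgame \<Rightarrow> ('s, 'a) pol \<Rightarrow> nat \<Rightarrow> ('s \<Rightarrow> 'a \<Rightarrow> real) set" where
  "BRset G x i = {y. pol_i G i y \<and> Vrho G (x(i := y)) i = BRval G x i}"

definition mismatch :: "('s, 'a) mgame \<Rightarrow> real" where
  "mismatch G = Sup {Inf {Max ((\<lambda>s. dnorm G (x(i := y)) s / init G s) ` states G) | y. y \<in> BRset G x i}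
                     | i x. i < nplayers G \<and> x \<in> polX G}"

text \<open>Operator F: minus the gradient of V_i(rho) w.r.t. player i's own coordinates
  (partial derivatives of the natural extension of V to all real coordinates).\<close>

definition grad :: "('s, 'a) mgame \<Rightarrow> ('s, 'a) pol \<Rightarrow> ('s, 'a) pol" where
  "grad G x = (\<lambda>i s a. deriv (\<lambda>t. Vrho G (x(i := (x i)(s := (x i s)(a := t)))) i) (x i s a))"

definition Fop :: "('s, 'a) mgame \<Rightarrow> ('s, 'a) pol \<Rightarrow> ('s, 'a) pol" where
  "Fop G x = (\<lambda>i s a. - grad G x i s a)"

definition Aresc :: "('s, 'a) mgame \<Rightarrow> nat \<Rightarrow> ('s, 'a) pol \<Rightarrow> ('s, 'a) pol" where
  "Aresc G c x = (\<lambda>i s a. if i = c then 1 / dvis G x s else 1)"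

definition sqdist :: "('s, 'a) mgame \<Rightarrow> ('s, 'a) pol \<Rightarrow> ('s, 'a) pol \<Rightarrow> real" where
  "sqdist G x y = (\<Sum>i<nplayers G. \<Sum>s\<in>states G. \<Sum>a\<in>acts G i. (x i s a - y i s a)\<^sup>2)"

definition proj :: "('s, 'a) mgame \<Rightarrow> ('s, 'a) pol \<Rightarrow> ('s, 'a) pol" where
  "proj G y = (THE x. x \<in> polX G \<and> (\<forall>x'\<in>polX G. sqdist G x y \<le> sqdist G x' y))"

definition step :: "('s, 'a) mgame \<Rightarrow> nat \<Rightarrow> real \<Rightarrow> ('s, 'a) pol \<Rightarrow> ('s, 'a) pol \<Rightarrow> ('s, 'a) pol" where
  "step G c \<eta> xh xp = proj G (\<lambda>i s a. xh i s a - \<eta> * (Aresc G c xp i s a * Fop G xp i s a))"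

text \<open>rogd G c eta x0 t = (x^(t), xhat^(t+1)), with x^(0) = xhat^(1) = x0.\<close>

fun rogd :: "('s, 'a) mgame \<Rightarrow> nat \<Rightarrow> real \<Rightarrow> ('s, 'a) pol \<Rightarrow> nat \<Rightarrow> ('s, 'a) pol \<times> ('s, 'a) pol" where
  "rogd G c \<eta> x0 0 = (x0, x0)"
| "rogd G c \<eta> x0 (Suc t) =
     (let xp = fst (rogd G c \<eta> x0 t); xh = snd (rogd G c \<eta> x0 t);
          xn = step G c \<eta> xh xp
      in (xn, step G c \<eta> xh xn))"

definition regret_condition :: "('s, 'a) mgame \<Rightarrow> bool" where
  "regret_condition G \<longleftrightarrow>
     (\<forall>(T::nat) (\<pi>::nat \<Rightarrow> ('s, 'a) pol). (\<forall>t\<in>{1..T}. \<pi> t \<in> polX G) \<longrightarrow>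
        (\<exists>\<pi>s\<in>polX G.
           (\<Sum>t=1..T. \<Sum>i<nplayers G. Vrho G ((\<pi> t)(i := \<pi>s i)) i)
         - (\<Sum>t=1..T. \<Sum>i<nplayers G. Vrho G (\<pi> t) i) \<ge> 0))"

definition game_size :: "('s, 'a) mgame \<Rightarrow> real" where
  "game_size G = real (nplayers G) + real (\<Sum>i<nplayers G. card (acts G i)) + real (card (states G))
     + 1 / zeta G + mismatch G + 1 / Min (init G ` states G)"

end

theory Submission
  imports Defs
begin

fun mp :: "'s set \<Rightarrow> ('s \<Rightarrow> 's \<Rightarrow> real) \<Rightarrow> nat \<Rightarrow> 's \<Rightarrow> 's \<Rightarrow> real" where
  "mp S M 0 s s' = (if s = s' then 1 else 0)"
| "mp S M (Suc h) s s' = (\<Sum>s''\<in>S. mp S M h s s'' * M s'' s')"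

definition Nm :: "'s set \<Rightarrow> ('s \<Rightarrow> 's \<Rightarrow> real) \<Rightarrow> 's \<Rightarrow> 's \<Rightarrow> real" where
  "Nm S M s s' = (\<Sum>h. mp S M h s s')"

lemma sum_ind_r: "finite S \<Longrightarrow> (\<Sum>u\<in>S. f u * (if u = a then 1 else 0)) = (if a \<in> S then f a else (0::real))"
proof -
  assume "finite S"
  have "(\<Sum>u\<in>S. f u * (if u = a then 1 else 0)) = (\<Sum>u\<in>S. if u = a then f u else 0)"
    by (intro sum.cong) auto
  then show ?thesis using \<open>finite S\<close> by (simp add: sum.delta')
qed

lemma sum_ind_l: "finite S \<Longrightarrow> (\<Sum>u\<in>S. (if a = u then 1 else 0) * f u) = (if a \<in> S then f a else (0::real))"
proof -
  assume "finite S"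
  have "(\<Sum>u\<in>S. (if a = u then 1 else 0) * f u) = (\<Sum>u\<in>S. if a = u then f u else 0)"
    by (intro sum.cong) auto
  then show ?thesis using \<open>finite S\<close> by (simp add: sum.delta)
qed

locale contr =
  fixes S :: "'s set" and M :: "'s \<Rightarrow> 's \<Rightarrow> real" and g :: real
  assumes fin: "finite S" and g0: "0 \<le> g" and g1: "g < 1"
    and rows: "\<And>s. s \<in> S \<Longrightarrow> (\<Sum>s'\<in>S. \<bar>M s s'\<bar>) \<le> g"
begin

lemma mp_left: "s \<in> S \<Longrightarrow> s' \<in> S \<Longrightarrow> mp S M (Suc h) s s' = (\<Sum>u\<in>S. M s u * mp S M h u s')"
proof (induction h arbitrary: s')
  case 0
  then show ?case using fin by (simp add: sum_ind_r sum_ind_l)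
next
  case (Suc h)
  have "mp S M (Suc (Suc h)) s s' = (\<Sum>s''\<in>S. (\<Sum>u\<in>S. M s u * mp S M h u s'') * M s'' s')"
    using Suc by simp
  also have "\<dots> = (\<Sum>u\<in>S. M s u * (\<Sum>s''\<in>S. mp S M h u s'' * M s'' s'))"
    by (simp add: sum_distrib_right sum_distrib_left mult.assoc) (rule sum.swap)
  finally show ?case by simp
qed

lemma mp_rows: "s \<in> S \<Longrightarrow> (\<Sum>s'\<in>S. \<bar>mp S M h s s'\<bar>) \<le> g ^ h"
proof (induction h)
  case 0
  then show ?case using fin by (simp add: if_distrib cong: if_cong)
next
  case (Suc h)
  have "(\<Sum>s'\<in>S. \<bar>mp S M (Suc h) s s'\<bar>) \<le> (\<Sum>s'\<in>S. \<Sum>s''\<in>S. \<bar>mp S M h s s''\<bar> * \<bar>M s'' s'\<bar>)"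
    by (auto intro!: sum_mono order.trans[OF sum_abs] simp: abs_mult)
  also have "\<dots> = (\<Sum>s''\<in>S. \<bar>mp S M h s s''\<bar> * (\<Sum>s'\<in>S. \<bar>M s'' s'\<bar>))"
    by (simp add: sum_distrib_left) (rule sum.swap)
  also have "\<dots> \<le> (\<Sum>s''\<in>S. \<bar>mp S M h s s''\<bar> * g)"
    by (intro sum_mono mult_left_mono rows) auto
  also have "\<dots> \<le> g ^ h * g"
    using Suc g0 by (simp add: sum_distrib_right[symmetric] mult_right_mono)
  finally show ?case by (simp add: mult.commute)
qed

lemma mp_entry: "s \<in> S \<Longrightarrow> s' \<in> S \<Longrightarrow> \<bar>mp S M h s s'\<bar> \<le> g ^ h"
  using mp_rows[of s h] member_le_sum[of s' S "\<lambda>s'. \<bar>mp S M h s s'\<bar>"] fin by force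

lemma mp_summable: "s \<in> S \<Longrightarrow> s' \<in> S \<Longrightarrow> summable (\<lambda>h. mp S M h s s')"
  by (rule summable_comparison_test[where g="\<lambda>h. g ^ h"])
     (use mp_entry g0 g1 in \<open>auto intro!: summable_geometric\<close>)

lemma mp_summable_abs: "s \<in> S \<Longrightarrow> s' \<in> S \<Longrightarrow> summable (\<lambda>h. \<bar>mp S M h s s'\<bar>)"
  by (rule summable_comparison_test[where g="\<lambda>h. g ^ h"])
     (use mp_entry g0 g1 in \<open>auto intro!: summable_geometric\<close>)

lemma N_left: "s \<in> S \<Longrightarrow> s' \<in> S \<Longrightarrow>
  Nm S M s s' = (if s = s' then 1 else 0) + (\<Sum>u\<in>S. M s u * Nm S M u s')"
proof -
  assume s: "s \<in> S" and s': "s' \<in> S"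
  have "Nm S M s s' = mp S M 0 s s' + (\<Sum>h. mp S M (Suc h) s s')"
    unfolding Nm_def using suminf_split_head[OF mp_summable[OF s s']] by simp
  also have "(\<Sum>h. mp S M (Suc h) s s') = (\<Sum>h. \<Sum>u\<in>S. M s u * mp S M h u s')"
    using mp_left[OF s s'] by simp
  also have "\<dots> = (\<Sum>u\<in>S. \<Sum>h. M s u * mp S M h u s')"
    by (rule suminf_sum) (intro summable_mult mp_summable s')
  also have "\<dots> = (\<Sum>u\<in>S. M s u * Nm S M u s')"
    unfolding Nm_def by (intro sum.cong refl suminf_mult mp_summable s') 
  finally show ?thesis by simp
qed

lemma N_right: "s \<in> S \<Longrightarrow> s' \<in> S \<Longrightarrow>
  Nm S M s s' = (if s = s' then 1 else 0) + (\<Sum>u\<in>S. Nm S M s u * M u s')"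
proof -
  assume s: "s \<in> S" and s': "s' \<in> S"
  have "Nm S M s s' = mp S M 0 s s' + (\<Sum>h. mp S M (Suc h) s s')"
    unfolding Nm_def using suminf_split_head[OF mp_summable[OF s s']] by simp
  also have "(\<Sum>h. mp S M (Suc h) s s') = (\<Sum>u\<in>S. \<Sum>h. mp S M h s u * M u s')"
    by simp (rule suminf_sum, intro summable_mult2 mp_summable s)
  also have "\<dots> = (\<Sum>u\<in>S. Nm S M s u * M u s')"
    unfolding Nm_def by (intro sum.cong refl suminf_mult2[symmetric] mp_summable s) 
  finally show ?thesis by simp
qed

lemma N_rows: "s \<in> S \<Longrightarrow> (\<Sum>s'\<in>S. \<bar>Nm S M s s'\<bar>) \<le> 1 / (1 - g)"
proof -
  assume s: "s \<in> S"
  have "(\<Sum>s'\<in>S. \<bar>Nm S M s s'\<bar>) \<le> (\<Sum>s'\<in>S. \<Sum>h. \<bar>mp S M h s s'\<bar>)"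
    unfolding Nm_def by (intro sum_mono summable_rabs mp_summable_abs s) 
  also have "\<dots> = (\<Sum>h. \<Sum>s'\<in>S. \<bar>mp S M h s s'\<bar>)"
    by (rule suminf_sum[symmetric]) (intro mp_summable_abs s)
  also have "\<dots> \<le> (\<Sum>h. g ^ h)"
    by (intro suminf_le mp_rows s summable_sum mp_summable_abs summable_geometric) (use g0 g1 in auto)
  also have "\<dots> = 1 / (1 - g)" using g0 g1 by (intro suminf_geometric) auto
  finally show ?thesis .
qed

lemma N_abs: "s \<in> S \<Longrightarrow> s' \<in> S \<Longrightarrow> \<bar>Nm S M s s'\<bar> \<le> 1 / (1 - g)"
  using N_rows[of s] member_le_sum[of s' S "\<lambda>s'. \<bar>Nm S M s s'\<bar>"] fin by force

lemma mp_nonneg: "(\<And>s s'. s \<in> S \<Longrightarrow> s' \<in> S \<Longrightarrow> M s s' \<ge> 0) \<Longrightarrow> s' \<in> S \<Longrightarrow> mp S M h s s' \<ge> 0"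
  by (induction h arbitrary: s') (auto intro!: sum_nonneg)

lemma N_nonneg: "(\<And>s s'. s \<in> S \<Longrightarrow> s' \<in> S \<Longrightarrow> M s s' \<ge> 0) \<Longrightarrow> s \<in> S \<Longrightarrow> s' \<in> S \<Longrightarrow> Nm S M s s' \<ge> 0"
  unfolding Nm_def by (intro suminf_nonneg mp_summable mp_nonneg) auto

lemma N_diag: "(\<And>s s'. s \<in> S \<Longrightarrow> s' \<in> S \<Longrightarrow> M s s' \<ge> 0) \<Longrightarrow> s \<in> S \<Longrightarrow> Nm S M s s \<ge> 1"
  using N_left[of s s] by (auto intro!: sum_nonneg mult_nonneg_nonneg N_nonneg)

end


locale mg =
  fixes G :: "('s, 'a) mgame"
  assumes wf: "wf_game G"
begin

abbreviation "S \<equiv> states G"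
abbreviation "n \<equiv> nplayers G"
abbreviation "A \<equiv> acts G"
abbreviation "J \<equiv> joint G"
abbreviation "\<rho> \<equiv> init G"
abbreviation "\<zeta> \<equiv> zeta G"
abbreviation "PT \<equiv> Ptrans G"
abbreviation "NN x \<equiv> Nm (states G) (Ptrans G x)"

lemma finS: "finite S" and S_ne: "S \<noteq> {}" and n1: "n \<ge> 1"
  and finA: "i < n \<Longrightarrow> finite (A i)" and A_ne: "i < n \<Longrightarrow> A i \<noteq> {}"
  and trans_nn: "s \<in> S \<Longrightarrow> a \<in> J \<Longrightarrow> s' \<in> S \<Longrightarrow> trans G s a s' \<ge> 0"
  and zeta_pos: "\<zeta> > 0"
  and rew_b: "i < n \<Longrightarrow> s \<in> S \<Longrightarrow> a \<in> J \<Longrightarrow> \<bar>rew G i s a\<bar> \<le> 1"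
  and rho_pos: "s \<in> S \<Longrightarrow> \<rho> s > 0" and rho_sum: "(\<Sum>s\<in>S. \<rho> s) = 1"
  using wf unfolding wf_game_def by (auto simp: abs_le_iff)

lemma finJ: "finite J"
  unfolding joint_def by (intro finite_PiE) (auto simp: finA)

lemma J_ne: "J \<noteq> {}"
  unfolding joint_def using A_ne by (auto simp: PiE_eq_empty_iff)

lemma zeta_set: "{1 - (\<Sum>s'\<in>states G. trans G s a s') | s a. s \<in> S \<and> a \<in> J}
   = (\<lambda>(s,a). 1 - (\<Sum>s'\<in>S. trans G s a s')) ` (S \<times> J)"
  by auto

lemma trans_sum: "s \<in> S \<Longrightarrow> a \<in> J \<Longrightarrow> (\<Sum>s'\<in>S. trans G s a s') \<le> 1 - \<zeta>"
proof -
  assume "s \<in> S" "a \<in> J"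
  then have "\<zeta> \<le> 1 - (\<Sum>s'\<in>S. trans G s a s')"
    unfolding zeta_def zeta_set using finS finJ by (intro Min_le) auto
  then show ?thesis by simp
qed

lemma zeta_le1: "\<zeta> \<le> 1"
proof -
  obtain s a where "s \<in> S" "a \<in> J" using S_ne J_ne by blast
  then show ?thesis using trans_sum[of s a] sum_nonneg[of S "trans G s a"] trans_nn by force
qed

lemma rho_le1: "s \<in> S \<Longrightarrow> \<rho> s \<le> 1"
  using member_le_sum[of s S \<rho>] rho_sum rho_pos finS by (force simp: less_imp_le)

lemma polX_D: "x \<in> polX G \<Longrightarrow> j < n \<Longrightarrow> s \<in> S \<Longrightarrow> b \<in> A j \<Longrightarrow> x j s b \<ge> 0"
  and polX_sum: "x \<in> polX G \<Longrightarrow> j < n \<Longrightarrow> s \<in> S \<Longrightarrow> (\<Sum>b\<in>A j. x j s b) = 1"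
  and polX_out: "x \<in> polX G \<Longrightarrow> j < n \<Longrightarrow> s \<notin> S \<or> b \<notin> A j \<Longrightarrow> x j s b = 0"
  unfolding polX_def pol_i_def by auto

lemma prob_sum: "(\<Sum>a\<in>J. prob_joint G x s a) = (\<Prod>j<n. \<Sum>b\<in>A j. x j s b)"
  unfolding joint_def prob_joint_def by (rule prod_sum_PiE[symmetric]) (auto simp: finA)

lemma prob_abs_sum: "(\<Sum>a\<in>J. \<bar>prob_joint G x s a\<bar>) = (\<Prod>j<n. \<Sum>b\<in>A j. \<bar>x j s b\<bar>)"
  unfolding joint_def prob_joint_def abs_prod by (rule prod_sum_PiE[symmetric]) (auto simp: finA)

lemma joint_mem: "a \<in> J \<Longrightarrow> j < n \<Longrightarrow> a j \<in> A j"
  unfolding joint_def by auto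

lemma prob_nn: "x \<in> polX G \<Longrightarrow> s \<in> S \<Longrightarrow> a \<in> J \<Longrightarrow> prob_joint G x s a \<ge> 0"
  unfolding prob_joint_def by (auto intro!: prod_nonneg polX_D joint_mem)

lemma prob_sum1: "x \<in> polX G \<Longrightarrow> s \<in> S \<Longrightarrow> (\<Sum>a\<in>J. prob_joint G x s a) = 1"
  unfolding prob_sum by (auto simp: polX_sum)

definition kap :: "('s,'a) pol \<Rightarrow> 's \<Rightarrow> real" where
  "kap x s = (\<Prod>j<n. \<Sum>b\<in>A j. \<bar>x j s b\<bar>)"

lemma PT_rows: "s \<in> S \<Longrightarrow> (\<Sum>s'\<in>S. \<bar>PT x s s'\<bar>) \<le> (1 - \<zeta>) * kap x s"
proof -
  assume s: "s \<in> S"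
  have "(\<Sum>s'\<in>S. \<bar>PT x s s'\<bar>) \<le> (\<Sum>s'\<in>S. \<Sum>a\<in>J. \<bar>prob_joint G x s a\<bar> * trans G s a s')"
    unfolding Ptrans_def
    by (intro sum_mono order.trans[OF sum_abs]) (auto simp: abs_mult s trans_nn intro!: sum_mono)
  also have "\<dots> = (\<Sum>a\<in>J. \<bar>prob_joint G x s a\<bar> * (\<Sum>s'\<in>S. trans G s a s'))"
    by (simp add: sum_distrib_left) (rule sum.swap)
  also have "\<dots> \<le> (\<Sum>a\<in>J. \<bar>prob_joint G x s a\<bar> * (1 - \<zeta>))"
    by (intro sum_mono mult_left_mono trans_sum s) auto
  also have "\<dots> = (1 - \<zeta>) * kap x s"
    unfolding kap_def prob_abs_sum[symmetric] by (simp add: sum_distrib_left[symmetric] mult.commute)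
  finally show ?thesis .
qed

lemma kap_polX: "x \<in> polX G \<Longrightarrow> s \<in> S \<Longrightarrow> kap x s = 1"
  unfolding kap_def by (intro prod.neutral ballI) (auto simp: polX_sum polX_D)

lemma contr_polX: "x \<in> polX G \<Longrightarrow> contr S (PT x) (1 - \<zeta>)"
proof
  fix s assume "x \<in> polX G" "s \<in> S"
  then show "(\<Sum>s'\<in>S. \<bar>PT x s s'\<bar>) \<le> 1 - \<zeta>" using PT_rows[of s x] kap_polX[of x s] by simp
qed (use finS zeta_pos zeta_le1 in auto)

lemma PT_nn: "x \<in> polX G \<Longrightarrow> s \<in> S \<Longrightarrow> s' \<in> S \<Longrightarrow> PT x s s' \<ge> 0"
  unfolding Ptrans_def by (auto intro!: sum_nonneg mult_nonneg_nonneg prob_nn trans_nn)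

lemma mpow_mp: "mpow G x h s s' = mp S (PT x) h s s'"
  by (induction h arbitrary: s') auto

lemma Val_N: "contr S (PT x) g \<Longrightarrow> s \<in> S \<Longrightarrow>
   Val G x i s = (\<Sum>s'\<in>S. NN x s s' * rew_pol G x i s')"
proof -
  assume c: "contr S (PT x) g" and s: "s \<in> S"
  have "Val G x i s = (\<Sum>s'\<in>S. \<Sum>h. mp S (PT x) h s s' * rew_pol G x i s')"
    unfolding Val_def mpow_mp
    by (rule suminf_sum) (intro summable_mult2 contr.mp_summable[OF c] s, auto)
  also have "\<dots> = (\<Sum>s'\<in>S. NN x s s' * rew_pol G x i s')"
    unfolding Nm_def
    by (intro sum.cong refl suminf_mult2[symmetric] contr.mp_summable[OF c] s) auto
  finally show ?thesis .
qed

lemma dvis_N: "contr S (PT x) g \<Longrightarrow> s \<in> S \<Longrightarrow>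
   dvis G x s = (\<Sum>s0\<in>S. \<rho> s0 * NN x s0 s)"
proof -
  assume c: "contr S (PT x) g" and s: "s \<in> S"
  have "dvis G x s = (\<Sum>s0\<in>S. \<Sum>h. \<rho> s0 * mp S (PT x) h s0 s)"
    unfolding dvis_def mpow_mp
    by (rule suminf_sum) (intro summable_mult contr.mp_summable[OF c] s, auto)
  also have "\<dots> = (\<Sum>s0\<in>S. \<rho> s0 * NN x s0 s)"
    unfolding Nm_def
    by (intro sum.cong refl suminf_mult contr.mp_summable[OF c] s) auto
  finally show ?thesis .
qed

lemma rew_pol_b: "x \<in> polX G \<Longrightarrow> i < n \<Longrightarrow> s \<in> S \<Longrightarrow> \<bar>rew_pol G x i s\<bar> \<le> 1"
proof -
  assume x: "x \<in> polX G" and i: "i < n" and s: "s \<in> S"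
  have "\<bar>rew_pol G x i s\<bar> \<le> (\<Sum>a\<in>J. prob_joint G x s a * 1)"
    unfolding rew_pol_def
    by (intro order.trans[OF sum_abs] sum_mono) 
       (auto simp: abs_mult prob_nn x s intro!: mult_left_le rew_b i)
  then show ?thesis using prob_sum1[OF x s] by simp
qed

lemma Val_b: "x \<in> polX G \<Longrightarrow> i < n \<Longrightarrow> s \<in> S \<Longrightarrow> \<bar>Val G x i s\<bar> \<le> 1 / \<zeta>"
proof -
  assume x: "x \<in> polX G" and i: "i < n" and s: "s \<in> S"
  note c = contr_polX[OF x]
  have "\<bar>Val G x i s\<bar> \<le> (\<Sum>s'\<in>S. \<bar>NN x s s'\<bar> * 1)"
    unfolding Val_N[OF c s]
    by (intro order.trans[OF sum_abs] sum_mono) 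
       (auto simp: abs_mult intro!: mult_left_le rew_pol_b x i)
  also have "\<dots> \<le> 1 / (1 - (1 - \<zeta>))" using contr.N_rows[OF c s] by simp
  finally show ?thesis by simp
qed

lemma dvis_nn: "x \<in> polX G \<Longrightarrow> s \<in> S \<Longrightarrow> dvis G x s \<ge> 0"
  using dvis_N[OF contr_polX] contr.N_nonneg[OF contr_polX] PT_nn rho_pos
  by (auto intro!: sum_nonneg mult_nonneg_nonneg simp: less_imp_le)

lemma dvis_ge: "x \<in> polX G \<Longrightarrow> s \<in> S \<Longrightarrow> dvis G x s \<ge> \<rho> s"
proof -
  assume x: "x \<in> polX G" and s: "s \<in> S"
  note c = contr_polX[OF x]
  have nn: "\<And>s0. s0 \<in> S \<Longrightarrow> \<rho> s0 * NN x s0 s \<ge> 0"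
    using contr.N_nonneg[OF c] PT_nn[OF x] rho_pos s by (auto intro!: mult_nonneg_nonneg simp: less_imp_le)
  have "\<rho> s \<le> \<rho> s * NN x s s"
    using contr.N_diag[OF c, of s] PT_nn[OF x] rho_pos[OF s] s by auto
  also have "\<dots> \<le> (\<Sum>s0\<in>S. \<rho> s0 * NN x s0 s)"
    by (rule member_le_sum[OF s]) (use nn finS in auto)
  finally show ?thesis using dvis_N[OF c s] by simp
qed

lemma dvis_pos: "x \<in> polX G \<Longrightarrow> s \<in> S \<Longrightarrow> dvis G x s > 0"
  using dvis_ge rho_pos by (meson less_le_trans)

lemma dvis_sum: "x \<in> polX G \<Longrightarrow> (\<Sum>s\<in>S. dvis G x s) \<le> 1 / \<zeta>"
proof -
  assume x: "x \<in> polX G"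
  note c = contr_polX[OF x]
  have "(\<Sum>s\<in>S. dvis G x s) = (\<Sum>s0\<in>S. \<rho> s0 * (\<Sum>s\<in>S. NN x s0 s))"
    using dvis_N[OF c] by (simp add: sum_distrib_left) (rule sum.swap)
  also have "\<dots> \<le> (\<Sum>s0\<in>S. \<rho> s0 * (1 / \<zeta>))"
  proof (intro sum_mono mult_left_mono)
    fix s0 assume s0: "s0 \<in> S"
    have "(\<Sum>s\<in>S. NN x s0 s) \<le> (\<Sum>s\<in>S. \<bar>NN x s0 s\<bar>)" by (intro sum_mono) auto
    also have "\<dots> \<le> 1 / \<zeta>" using contr.N_rows[OF c s0] by simp
    finally show "(\<Sum>s\<in>S. NN x s0 s) \<le> 1 / \<zeta>" .
    show "0 \<le> \<rho> s0" using rho_pos[OF s0] by simp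
  qed
  also have "\<dots> = 1 / \<zeta>" using rho_sum by (simp add: sum_divide_distrib[symmetric])
  finally show ?thesis .
qed

lemma dvis_le: "x \<in> polX G \<Longrightarrow> s \<in> S \<Longrightarrow> dvis G x s \<le> 1 / \<zeta>"
  using dvis_sum member_le_sum[of s S "dvis G x"] dvis_nn finS by force

end


context contr begin

lemma V_eq: "s \<in> S \<Longrightarrow> (\<Sum>s'\<in>S. Nm S M s s' * r s') = r s + (\<Sum>u\<in>S. M s u * (\<Sum>v\<in>S. Nm S M u v * r v))"
proof -
  assume s: "s \<in> S"
  have "(\<Sum>s'\<in>S. Nm S M s s' * r s') = (\<Sum>s'\<in>S. ((if s = s' then 1 else 0) + (\<Sum>u\<in>S. M s u * Nm S M u s')) * r s')"
    by (intro sum.cong refl) (simp add: N_left s)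
  also have "\<dots> = (\<Sum>s'\<in>S. (if s = s' then 1 else 0) * r s') + (\<Sum>s'\<in>S. \<Sum>u\<in>S. M s u * Nm S M u s' * r s')"
    by (simp add: distrib_right sum.distrib sum_distrib_right)
  also have "(\<Sum>s'\<in>S. (if s = s' then 1 else 0) * r s') = r s" using s fin by (simp add: sum_ind_l)
  also have "(\<Sum>s'\<in>S. \<Sum>u\<in>S. M s u * Nm S M u s' * r s') = (\<Sum>u\<in>S. M s u * (\<Sum>v\<in>S. Nm S M u v * r v))"
    by (subst sum.swap) (simp add: sum_distrib_left mult.assoc)
  finally show ?thesis .
qed

lemma NM: "s \<in> S \<Longrightarrow> u \<in> S \<Longrightarrow> Nm S M s u - (\<Sum>s'\<in>S. Nm S M s s' * M s' u) = (if s = u then 1 else 0)"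
  using N_right by simp

lemma NM_vec: "s \<in> S \<Longrightarrow> (\<Sum>s'\<in>S. Nm S M s s' * (w s' - (\<Sum>u\<in>S. M s' u * w u))) = w s"
proof -
  assume s: "s \<in> S"
  have "(\<Sum>s'\<in>S. Nm S M s s' * (w s' - (\<Sum>u\<in>S. M s' u * w u))) =
        (\<Sum>u\<in>S. (Nm S M s u - (\<Sum>s'\<in>S. Nm S M s s' * M s' u)) * w u)"
    by (simp add: algebra_simps sum_subtractf sum_distrib_left sum_distrib_right) (subst sum.swap, simp add: mult.assoc)
  also have "\<dots> = (\<Sum>u\<in>S. (if s = u then 1 else 0) * w u)"
    by (intro sum.cong refl) (simp add: NM s)
  also have "\<dots> = w s" using s fin by (simp add: sum_ind_l)
  finally show ?thesis .
qed

lemma d_eq: "s \<in> S \<Longrightarrow> (\<Sum>s0\<in>S. \<rho> s0 * Nm S M s0 s) = \<rho> s + (\<Sum>s1\<in>S. (\<Sum>s0\<in>S. \<rho> s0 * Nm S M s0 s1) * M s1 s)"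
proof -
  assume s: "s \<in> S"
  have "(\<Sum>s0\<in>S. \<rho> s0 * Nm S M s0 s) = (\<Sum>s0\<in>S. \<rho> s0 * ((if s0 = s then 1 else 0) + (\<Sum>u\<in>S. Nm S M s0 u * M u s)))"
    by (intro sum.cong refl) (simp add: N_right s)
  also have "\<dots> = (\<Sum>s0\<in>S. \<rho> s0 * (if s0 = s then 1 else 0)) + (\<Sum>s0\<in>S. \<Sum>u\<in>S. \<rho> s0 * Nm S M s0 u * M u s)"
    by (simp add: algebra_simps sum.distrib sum_distrib_left)
  also have "(\<Sum>s0\<in>S. \<rho> s0 * (if s0 = s then 1 else 0)) = \<rho> s" using s fin by (simp add: sum_ind_r)
  also have "(\<Sum>s0\<in>S. \<Sum>u\<in>S. \<rho> s0 * Nm S M s0 u * M u s) = (\<Sum>s1\<in>S. (\<Sum>s0\<in>S. \<rho> s0 * Nm S M s0 s1) * M s1 s)"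
    by (subst sum.swap) (simp add: sum_distrib_right)
  finally show ?thesis .
qed

end

lemma pd_vec:
  assumes c1: "contr S M1 g1" and c2: "contr S M2 g2" and s: "s \<in> S"
  shows "(\<Sum>s'\<in>S. Nm S M2 s s' * r2 s') - (\<Sum>s'\<in>S. Nm S M1 s s' * r1 s') =
    (\<Sum>s'\<in>S. Nm S M2 s s' * (r2 s' - r1 s' + (\<Sum>u\<in>S. (M2 s' u - M1 s' u) * (\<Sum>v\<in>S. Nm S M1 u v * r1 v))))"
proof -
  define V1 where "V1 s' = (\<Sum>v\<in>S. Nm S M1 s' v * r1 v)" for s'
  have fin: "finite S" using c1 contr.fin by blast
  have w: "r2 s' - r1 s' + (\<Sum>u\<in>S. (M2 s' u - M1 s' u) * V1 u) = r2 s' - (V1 s' - (\<Sum>u\<in>S. M2 s' u * V1 u))"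
    if "s' \<in> S" for s'
    using contr.V_eq[OF c1 that, of r1] unfolding V1_def[symmetric]
    by (simp add: algebra_simps sum_subtractf)
  have "(\<Sum>s'\<in>S. Nm S M2 s s' * (r2 s' - r1 s' + (\<Sum>u\<in>S. (M2 s' u - M1 s' u) * V1 u))) =
        (\<Sum>s'\<in>S. Nm S M2 s s' * r2 s') - (\<Sum>s'\<in>S. Nm S M2 s s' * (V1 s' - (\<Sum>u\<in>S. M2 s' u * V1 u)))"
    by (simp add: w right_diff_distrib sum_subtractf cong: sum.cong)
  also have "(\<Sum>s'\<in>S. Nm S M2 s s' * (V1 s' - (\<Sum>u\<in>S. M2 s' u * V1 u))) = V1 s"
    by (rule contr.NM_vec[OF c2 s])
  finally show ?thesis unfolding V1_def by simp
qed

lemma d_diff: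
  assumes c1: "contr S M1 g1" and c2: "contr S M2 g2" and s: "s \<in> S"
  shows "(\<Sum>s0\<in>S. \<rho> s0 * Nm S M2 s0 s) - (\<Sum>s0\<in>S. \<rho> s0 * Nm S M1 s0 s) =
    (\<Sum>s1\<in>S. (\<Sum>s0\<in>S. \<rho> s0 * Nm S M2 s0 s1) * (\<Sum>s2\<in>S. (M2 s1 s2 - M1 s1 s2) * Nm S M1 s2 s))"
proof -
  define d2 where "d2 s1 = (\<Sum>s0\<in>S. \<rho> s0 * Nm S M2 s0 s1)" for s1
  have fin: "finite S" using c1 contr.fin by blast
  have A: "(\<Sum>s1\<in>S. d2 s1 * (\<Sum>s2\<in>S. M2 s1 s2 * Nm S M1 s2 s)) = (\<Sum>s2\<in>S. d2 s2 * Nm S M1 s2 s) - (\<Sum>s2\<in>S. \<rho> s2 * Nm S M1 s2 s)"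
  proof -
    have "(\<Sum>s1\<in>S. d2 s1 * (\<Sum>s2\<in>S. M2 s1 s2 * Nm S M1 s2 s)) = (\<Sum>s2\<in>S. (\<Sum>s1\<in>S. d2 s1 * M2 s1 s2) * Nm S M1 s2 s)"
      by (simp add: sum_distrib_left sum_distrib_right mult.assoc) (rule sum.swap)
    also have "\<dots> = (\<Sum>s2\<in>S. (d2 s2 - \<rho> s2) * Nm S M1 s2 s)"
      by (intro sum.cong refl) (use contr.d_eq[OF c2, of _ \<rho>] in \<open>simp add: d2_def\<close>)
    finally show ?thesis by (simp add: left_diff_distrib sum_subtractf)
  qed
  have B: "(\<Sum>s1\<in>S. d2 s1 * (\<Sum>s2\<in>S. M1 s1 s2 * Nm S M1 s2 s)) = (\<Sum>s1\<in>S. d2 s1 * Nm S M1 s1 s) - d2 s"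
  proof -
    have "(\<Sum>s1\<in>S. d2 s1 * (\<Sum>s2\<in>S. M1 s1 s2 * Nm S M1 s2 s)) = (\<Sum>s1\<in>S. d2 s1 * (Nm S M1 s1 s - (if s1 = s then 1 else 0)))"
      by (intro sum.cong refl) (use contr.N_left[OF c1] s in auto)
    also have "\<dots> = (\<Sum>s1\<in>S. d2 s1 * Nm S M1 s1 s) - (\<Sum>s1\<in>S. d2 s1 * (if s1 = s then 1 else 0))"
      by (simp add: right_diff_distrib sum_subtractf)
    also have "(\<Sum>s1\<in>S. d2 s1 * (if s1 = s then 1 else 0)) = d2 s" using fin s by (simp add: sum_ind_r)
    finally show ?thesis .
  qed
  have "(\<Sum>s1\<in>S. d2 s1 * (\<Sum>s2\<in>S. (M2 s1 s2 - M1 s1 s2) * Nm S M1 s2 s)) =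
     (\<Sum>s1\<in>S. d2 s1 * (\<Sum>s2\<in>S. M2 s1 s2 * Nm S M1 s2 s)) - (\<Sum>s1\<in>S. d2 s1 * (\<Sum>s2\<in>S. M1 s1 s2 * Nm S M1 s2 s))"
    by (simp add: left_diff_distrib right_diff_distrib sum_subtractf)
  also have "\<dots> = d2 s - (\<Sum>s2\<in>S. \<rho> s2 * Nm S M1 s2 s)" unfolding A B by simp
  finally show ?thesis unfolding d2_def by simp
qed


definition ev :: "'a \<Rightarrow> 's \<Rightarrow> 'a \<Rightarrow> real" where "ev b = (\<lambda>_ a. if a = b then 1 else 0)"

definition Wf :: "('s,'a) mgame \<Rightarrow> ('s,'a) pol \<Rightarrow> nat \<Rightarrow> 's \<Rightarrow> (nat \<Rightarrow> 'a) \<Rightarrow> real" where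
  "Wf G x i s a' = rew G i s a' + (\<Sum>s'\<in>states G. trans G s a' s' * Val G x i s')"

definition Qf :: "('s,'a) mgame \<Rightarrow> ('s,'a) pol \<Rightarrow> nat \<Rightarrow> 's \<Rightarrow> 'a \<Rightarrow> real" where
  "Qf G x i s b = (\<Sum>a'\<in>joint G. prob_joint G (x(i := ev b)) s a' * Wf G x i s a')"

context mg begin

lemma prob_upd: "i < n \<Longrightarrow> prob_joint G (x(i:=f)) s a = f s (a i) * (\<Prod>j\<in>{..<n}-{i}. x j s (a j))"
  unfolding prob_joint_def by (subst prod.remove[of _ i]) (auto intro!: prod.cong)

lemma prob_diff: "i < n \<Longrightarrow> a \<in> J \<Longrightarrow>
  prob_joint G (x(i:=f)) s a - prob_joint G x s a = (\<Sum>b\<in>A i. (f s b - x i s b) * prob_joint G (x(i:=ev b)) s a)"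
proof -
  assume i: "i < n" and a: "a \<in> J"
  have px: "prob_joint G x s a = x i s (a i) * (\<Prod>j\<in>{..<n}-{i}. x j s (a j))"
    using prob_upd[OF i, of x "x i"] by simp
  have "(\<Sum>b\<in>A i. (f s b - x i s b) * prob_joint G (x(i:=ev b)) s a) =
        (\<Sum>b\<in>A i. ((f s b - x i s b) * (\<Prod>j\<in>{..<n}-{i}. x j s (a j))) * (if b = a i then 1 else 0))"
    by (intro sum.cong refl) (auto simp: prob_upd[OF i] ev_def)
  also have "\<dots> = (f s (a i) - x i s (a i)) * (\<Prod>j\<in>{..<n}-{i}. x j s (a j))"
    using joint_mem[OF a i] finA[OF i] by (simp add: sum_ind_r)
  finally show ?thesis by (simp add: prob_upd[OF i] px left_diff_distrib)
qed

lemma sum_prob_diff: "i < n \<Longrightarrow>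
  (\<Sum>a\<in>J. (prob_joint G (x(i:=f)) s a - prob_joint G x s a) * F a) =
  (\<Sum>b\<in>A i. (f s b - x i s b) * (\<Sum>a\<in>J. prob_joint G (x(i:=ev b)) s a * F a))"
proof -
  assume i: "i < n"
  have "(\<Sum>a\<in>J. (prob_joint G (x(i:=f)) s a - prob_joint G x s a) * F a) =
        (\<Sum>a\<in>J. \<Sum>b\<in>A i. (f s b - x i s b) * prob_joint G (x(i:=ev b)) s a * F a)"
    by (intro sum.cong refl) (simp add: prob_diff[OF i] sum_distrib_right)
  also have "\<dots> = (\<Sum>b\<in>A i. (f s b - x i s b) * (\<Sum>a\<in>J. prob_joint G (x(i:=ev b)) s a * F a))"
    by (subst sum.swap) (simp add: sum_distrib_left mult.assoc)
  finally show ?thesis .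
qed

lemma bracket: "rew_pol G y i s - rew_pol G x i s + (\<Sum>u\<in>S. (PT y s u - PT x s u) * Val G x i u)
  = (\<Sum>a\<in>J. (prob_joint G y s a - prob_joint G x s a) * Wf G x i s a)"
proof -
  have "(\<Sum>u\<in>S. (PT y s u - PT x s u) * Val G x i u) =
        (\<Sum>u\<in>S. \<Sum>a\<in>J. (prob_joint G y s a - prob_joint G x s a) * trans G s a u * Val G x i u)"
    unfolding Ptrans_def by (intro sum.cong refl) (simp add: sum_subtractf[symmetric] left_diff_distrib sum_distrib_right)
  also have "\<dots> = (\<Sum>a\<in>J. (prob_joint G y s a - prob_joint G x s a) * (\<Sum>u\<in>S. trans G s a u * Val G x i u))"
    by (subst sum.swap) (simp add: sum_distrib_left mult.assoc)
  finally show ?thesis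
    unfolding rew_pol_def Wf_def
    by (simp add: distrib_left sum.distrib left_diff_distrib sum_subtractf algebra_simps)
qed

lemma q_eq: "i < n \<Longrightarrow> rew_pol G (x(i:=f)) i s - rew_pol G x i s + (\<Sum>u\<in>S. (PT (x(i:=f)) s u - PT x s u) * Val G x i u)
   = (\<Sum>b\<in>A i. (f s b - x i s b) * Qf G x i s b)"
  unfolding bracket sum_prob_diff Qf_def by simp

lemma PD_state:
  assumes c1: "contr S (PT x) g1" and c2: "contr S (PT (x(i:=f))) g2" and i: "i < n" and s: "s \<in> S"
  shows "Val G (x(i:=f)) i s - Val G x i s =
    (\<Sum>s'\<in>S. NN (x(i:=f)) s s' * (\<Sum>b\<in>A i. (f s' b - x i s' b) * Qf G x i s' b))"
proof -
  have "Val G (x(i:=f)) i s - Val G x i s = (\<Sum>s'\<in>S. NN (x(i:=f)) s s' * rew_pol G (x(i:=f)) i s') - (\<Sum>s'\<in>S. NN x s s' * rew_pol G x i s')"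
    using Val_N[OF c1 s] Val_N[OF c2 s] by simp
  also have "\<dots> = (\<Sum>s'\<in>S. NN (x(i:=f)) s s' * (rew_pol G (x(i:=f)) i s' - rew_pol G x i s' + (\<Sum>u\<in>S. (PT (x(i:=f)) s' u - PT x s' u) * (\<Sum>v\<in>S. NN x u v * rew_pol G x i v))))"
    by (rule pd_vec[OF c1 c2 s])
  also have "\<dots> = (\<Sum>s'\<in>S. NN (x(i:=f)) s s' * (rew_pol G (x(i:=f)) i s' - rew_pol G x i s' + (\<Sum>u\<in>S. (PT (x(i:=f)) s' u - PT x s' u) * Val G x i u)))"
    using Val_N[OF c1] by (intro sum.cong refl arg_cong2[where f="(*)"] arg_cong2[where f="(+)"]) auto
  also have "\<dots> = (\<Sum>s'\<in>S. NN (x(i:=f)) s s' * (\<Sum>b\<in>A i. (f s' b - x i s' b) * Qf G x i s' b))"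
    by (simp add: q_eq[OF i])
  finally show ?thesis .
qed

lemma PD_rho:
  assumes c1: "contr S (PT x) g1" and c2: "contr S (PT (x(i:=f))) g2" and i: "i < n"
  shows "Vrho G (x(i:=f)) i - Vrho G x i =
    (\<Sum>s'\<in>S. dvis G (x(i:=f)) s' * (\<Sum>b\<in>A i. (f s' b - x i s' b) * Qf G x i s' b))"
proof -
  have "Vrho G (x(i:=f)) i - Vrho G x i = (\<Sum>s\<in>S. \<rho> s * (Val G (x(i:=f)) i s - Val G x i s))"
    unfolding Vrho_def by (simp add: right_diff_distrib sum_subtractf)
  also have "\<dots> = (\<Sum>s\<in>S. \<Sum>s'\<in>S. \<rho> s * NN (x(i:=f)) s s' * (\<Sum>b\<in>A i. (f s' b - x i s' b) * Qf G x i s' b))"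
    by (intro sum.cong refl) (simp add: PD_state[OF c1 c2 i] sum_distrib_left mult.assoc)
  also have "\<dots> = (\<Sum>s'\<in>S. dvis G (x(i:=f)) s' * (\<Sum>b\<in>A i. (f s' b - x i s' b) * Qf G x i s' b))"
    by (subst sum.swap) (intro sum.cong refl, simp add: dvis_N[OF c2] sum_distrib_right)
  finally show ?thesis .
qed

end


lemma sum_ind_c: "finite S \<Longrightarrow> a \<in> S \<Longrightarrow> (\<Sum>u\<in>S. f u * (if u = a then c else 0)) = f a * (c::real)"
proof -
  assume "finite S" "a \<in> S"
  have "(\<Sum>u\<in>S. f u * (if u = a then c else 0)) = (\<Sum>u\<in>S. if u = a then f u * c else 0)"
    by (intro sum.cong) auto
  then show ?thesis using \<open>finite S\<close> \<open>a \<in> S\<close> by (simp add: sum.delta')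
qed


context mg begin

lemma sum_upd_abs: "finite B \<Longrightarrow> a \<in> B \<Longrightarrow> (\<Sum>b\<in>B. \<bar>(g(a := t)) b\<bar>) = \<bar>t::real\<bar> + (\<Sum>b\<in>B. \<bar>g b\<bar>) - \<bar>g a\<bar>"
proof -
  assume B: "finite B" "a \<in> B"
  have "(\<Sum>b\<in>B - {a}. \<bar>(g(a := t)) b\<bar>) = (\<Sum>b\<in>B - {a}. \<bar>g b\<bar>)"
    by (intro sum.cong) auto
  then show ?thesis using B by (simp add: sum.remove[of B a])
qed

lemma kap_pert:
  assumes x: "x \<in> polX G" and i: "i < n" and s: "s \<in> S" and a: "a \<in> A i" and s': "s' \<in> S"
  shows "kap (x(i := (x i)(s := (x i s)(a := t)))) s' \<le> 1 + \<bar>t - x i s a\<bar>"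
proof -
  let ?f = "(x i)(s := (x i s)(a := t))"
  have other: "(\<Prod>j\<in>{..<n}-{i}. \<Sum>b\<in>A j. \<bar>(x(i := ?f)) j s' b\<bar>) = 1"
    by (intro prod.neutral) (auto simp: polX_sum[OF x _ s'] polX_D[OF x _ s'])
  have "kap (x(i := ?f)) s' = (\<Sum>b\<in>A i. \<bar>?f s' b\<bar>) * (\<Prod>j\<in>{..<n}-{i}. \<Sum>b\<in>A j. \<bar>(x(i := ?f)) j s' b\<bar>)"
    unfolding kap_def by (subst prod.remove[of _ i]) (use i in auto)
  also have "\<dots> = (\<Sum>b\<in>A i. \<bar>?f s' b\<bar>)" using other by simp
  also have "\<dots> \<le> 1 + \<bar>t - x i s a\<bar>"
  proof (cases "s' = s")
    case True
    have "(\<Sum>b\<in>A i. \<bar>?f s' b\<bar>) = \<bar>t\<bar> + (\<Sum>b\<in>A i. \<bar>x i s b\<bar>) - \<bar>x i s a\<bar>"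
      using True sum_upd_abs[OF finA[OF i] a, of "x i s" t] by simp
    also have "\<dots> = \<bar>t\<bar> + 1 - x i s a"
      using polX_sum[OF x i s] polX_D[OF x i s] a by simp
    finally show ?thesis using polX_D[OF x i s a] by linarith
  next
    case False
    then show ?thesis using polX_sum[OF x i s'] polX_D[OF x i s'] by simp
  qed
  finally show ?thesis .
qed

lemma contr_pert:
  assumes x: "x \<in> polX G" and i: "i < n" and s: "s \<in> S" and a: "a \<in> A i" and t: "\<bar>t - x i s a\<bar> \<le> \<zeta>"
  shows "contr S (PT (x(i := (x i)(s := (x i s)(a := t))))) (1 - \<zeta>^2)"
proof
  fix s' assume s': "s' \<in> S"
  have "(\<Sum>s''\<in>S. \<bar>PT (x(i := (x i)(s := (x i s)(a := t)))) s' s''\<bar>) \<le> (1 - \<zeta>) * kap (x(i := (x i)(s := (x i s)(a := t)))) s'"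
    by (rule PT_rows[OF s'])
  also have "\<dots> \<le> (1 - \<zeta>) * (1 + \<zeta>)"
    using kap_pert[OF x i s a s', of t] t zeta_le1 by (intro mult_left_mono) auto
  finally show "(\<Sum>s''\<in>S. \<bar>PT (x(i := (x i)(s := (x i s)(a := t)))) s' s''\<bar>) \<le> 1 - \<zeta>^2"
    by (simp add: algebra_simps power2_eq_square)
qed (use finS zeta_pos zeta_le1 in \<open>auto simp: power_le_one\<close>)

lemma grad_formula:
  assumes x: "x \<in> polX G" and i: "i < n" and s: "s \<in> S" and a: "a \<in> A i"
  shows "grad G x i s a = dvis G x s * Qf G x i s a"
proof -
  define t0 where "t0 = x i s a"
  define ft where "ft t = (x i)(s := (x i s)(a := t))" for t
  define D where "D s2 = (\<Sum>a'\<in>J. prob_joint G (x(i := ev a)) s a' * trans G s a' s2)" for s2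
  define \<gamma> where "\<gamma> = (\<Sum>s2\<in>S. D s2 * NN x s2 s)"
  define Q where "Q = Qf G x i s a"
  define d0 where "d0 = dvis G x s"
  define \<delta> where "\<delta> = min \<zeta> (1 / (2 * (\<bar>\<gamma>\<bar> + 1)))"
  have \<delta>: "\<delta> > 0" using zeta_pos by (simp add: \<delta>_def)
  note c0 = contr_polX[OF x]
  have key: "Vrho G (x(i := ft t)) i = Vrho G x i + (t - t0) * (Q * d0) / (1 - (t - t0) * \<gamma>)"
    if t: "\<bar>t - t0\<bar> < \<delta>" for t
  proof -
    have tz: "\<bar>t - x i s a\<bar> \<le> \<zeta>" using t by (simp add: \<delta>_def t0_def)
    have ct: "contr S (PT (x(i := ft t))) (1 - \<zeta>^2)"
      unfolding ft_def by (rule contr_pert[OF x i s a tz])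
    have inner: "(\<Sum>b\<in>A i. (ft t s' b - x i s' b) * H s' b) = (if s' = s then (t - t0) * H s a else 0)"
      if s': "s' \<in> S" for s' and H :: "'s \<Rightarrow> 'a \<Rightarrow> real"
    proof -
      have "(\<Sum>b\<in>A i. (ft t s' b - x i s' b) * H s' b) =
            (\<Sum>b\<in>A i. (if s' = s then (t - t0) * H s' b else 0) * (if b = a then 1 else 0))"
        by (intro sum.cong refl) (auto simp: ft_def t0_def)
      also have "\<dots> = (if s' = s then (t - t0) * H s a else 0)"
        using finA[OF i] a by (simp add: sum_ind_r)
      finally show ?thesis .
    qed
    have V: "Vrho G (x(i := ft t)) i - Vrho G x i = dvis G (x(i := ft t)) s * ((t - t0) * Q)"
      unfolding PD_rho[OF c0 ct i]
      using finS s by (simp add: inner Q_def sum_ind_c cong: sum.cong)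
    have PTd: "PT (x(i := ft t)) s1 s2 - PT x s1 s2 = (if s1 = s then (t - t0) * D s2 else 0)"
      if s1: "s1 \<in> S" for s1 s2
    proof -
      have "PT (x(i := ft t)) s1 s2 - PT x s1 s2 =
        (\<Sum>a'\<in>J. (prob_joint G (x(i := ft t)) s1 a' - prob_joint G x s1 a') * trans G s1 a' s2)"
        unfolding Ptrans_def by (simp add: sum_subtractf left_diff_distrib)
      also have "\<dots> = (\<Sum>b\<in>A i. (ft t s1 b - x i s1 b) * (\<Sum>a'\<in>J. prob_joint G (x(i:=ev b)) s1 a' * trans G s1 a' s2))"
        by (rule sum_prob_diff[OF i])
      also have "\<dots> = (if s1 = s then (t - t0) * D s2 else 0)"
        by (subst inner[OF s1]) (simp add: D_def)
      finally show ?thesis .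
    qed
    have dd: "dvis G (x(i := ft t)) s - d0 = dvis G (x(i := ft t)) s * ((t - t0) * \<gamma>)"
    proof -
      have "dvis G (x(i := ft t)) s - d0 =
        (\<Sum>s1\<in>S. dvis G (x(i := ft t)) s1 * (\<Sum>s2\<in>S. (PT (x(i := ft t)) s1 s2 - PT x s1 s2) * NN x s2 s))"
        unfolding d0_def dvis_N[OF ct s] dvis_N[OF c0 s]
        by (subst d_diff[OF c0 ct s]) (intro sum.cong refl, simp add: dvis_N[OF ct])
      also have "\<dots> = (\<Sum>s1\<in>S. dvis G (x(i := ft t)) s1 * (if s1 = s then (t - t0) * \<gamma> else 0))"
        by (intro sum.cong refl) (auto simp: PTd \<gamma>_def sum_distrib_left mult.assoc)
      also have "\<dots> = dvis G (x(i := ft t)) s * ((t - t0) * \<gamma>)"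
        using finS s by (simp add: sum_ind_c)
      finally show ?thesis .
    qed
    have "\<bar>(t - t0) * \<gamma>\<bar> \<le> \<bar>t - t0\<bar> * (\<bar>\<gamma>\<bar> + 1)" by (simp add: abs_mult mult_left_mono)
    also have "\<dots> < 1 / (2 * (\<bar>\<gamma>\<bar> + 1)) * (\<bar>\<gamma>\<bar> + 1)"
      using t by (intro mult_strict_right_mono) (auto simp: \<delta>_def)
    also have "\<dots> = 1 / 2" by (simp add: field_simps)
    finally have den: "1 - (t - t0) * \<gamma> > 0" by linarith
    have dt: "dvis G (x(i := ft t)) s = d0 / (1 - (t - t0) * \<gamma>)"
      using dd den by (simp add: field_simps)
    show ?thesis using V dt by (simp add: field_simps)
  qed
  have ev: "eventually (\<lambda>t. Vrho G (x(i := ft t)) i = Vrho G x i + (t - t0) * (Q * d0) / (1 - (t - t0) * \<gamma>)) (nhds t0)"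
    unfolding eventually_nhds_metric using \<delta> key by (auto simp: dist_real_def)
  have der: "((\<lambda>t. Vrho G x i + (t - t0) * (Q * d0) / (1 - (t - t0) * \<gamma>)) has_field_derivative (Q * d0)) (at t0)"
    by (auto intro!: derivative_eq_intros)
  have "((\<lambda>t. Vrho G (x(i := ft t)) i) has_field_derivative (Q * d0)) (at t0)"
    using DERIV_cong_ev[OF refl ev refl] der by simp
  then have "deriv (\<lambda>t. Vrho G (x(i := ft t)) i) t0 = Q * d0" by (rule DERIV_imp_deriv)
  then show ?thesis unfolding grad_def ft_def t0_def Q_def d0_def by (simp add: mult.commute)
qed

end


lemma tau_ex:
  assumes B: "finite B" "B \<noteq> {}"
  shows "\<exists>\<tau>. (\<Sum>a\<in>B. max (y a - \<tau>) 0) = (1::real)"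
proof -
  define f where "f \<tau> = (\<Sum>a\<in>B. max (y a - \<tau>) 0)" for \<tau>
  define m where "m = Min (y ` B)"
  define M where "M = Max (y ` B)"
  have mle: "m \<le> y a" and yM: "y a \<le> M" if "a \<in> B" for a
    using that B by (auto simp: m_def M_def)
  obtain a0 where a0: "a0 \<in> B" using B by blast
  have fM: "f M = 0" unfolding f_def by (intro sum.neutral) (auto dest: yM)
  have "1 \<le> max (y a0 - (m - 1)) 0" using mle[OF a0] by simp
  also have "\<dots> \<le> f (m - 1)" unfolding f_def by (rule member_le_sum[OF a0]) (use B in auto)
  finally have fm: "1 \<le> f (m - 1)" .
  have mM: "m - 1 \<le> M" using mle[OF a0] yM[OF a0] by simp
  have cont: "continuous_on {m - 1 .. M} f" unfolding f_def by (intro continuous_intros)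
  obtain \<tau> where "f \<tau> = 1" using IVT2'[of f M 1 "m - 1", OF _ fm mM cont] fM by auto
  then show ?thesis unfolding f_def by blast
qed

definition tau :: "'a set \<Rightarrow> ('a \<Rightarrow> real) \<Rightarrow> real" where
  "tau B y = (SOME \<tau>. (\<Sum>a\<in>B. max (y a - \<tau>) 0) = 1)"

definition psimp :: "'a set \<Rightarrow> ('a \<Rightarrow> real) \<Rightarrow> 'a \<Rightarrow> real" where
  "psimp B y a = max (y a - tau B y) 0"

lemma psimp_sum: "finite B \<Longrightarrow> B \<noteq> {} \<Longrightarrow> (\<Sum>a\<in>B. psimp B y a) = 1"
  unfolding psimp_def tau_def by (rule someI_ex[OF tau_ex])

lemma psimp_nn: "psimp B y a \<ge> 0" unfolding psimp_def by simp

lemma psimp_VI: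
  assumes B: "finite B" "B \<noteq> {}" and z: "\<forall>a\<in>B. z a \<ge> 0" "(\<Sum>a\<in>B. z a) = 1"
  shows "(\<Sum>a\<in>B. (y a - psimp B y a) * (z a - psimp B y a)) \<le> 0"
proof -
  let ?t = "tau B y" and ?p = "psimp B y"
  have pt: "(y a - ?p a) * (z a - ?p a) \<le> ?t * (z a - ?p a)" if a: "a \<in> B" for a
  proof (cases "y a - ?t \<ge> 0")
    case True then show ?thesis by (simp add: psimp_def)
  next
    case False
    then have "?p a = 0" by (simp add: psimp_def)
    then show ?thesis using False z(1) a by (simp add: mult_right_mono)
  qed
  have "(\<Sum>a\<in>B. (y a - ?p a) * (z a - ?p a)) \<le> (\<Sum>a\<in>B. ?t * (z a - ?p a))"
    by (intro sum_mono pt)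
  also have "\<dots> = ?t * ((\<Sum>a\<in>B. z a) - (\<Sum>a\<in>B. ?p a))"
    by (simp add: sum_distrib_left sum_subtractf right_diff_distrib)
  also have "\<dots> = 0" using z psimp_sum[OF B] by simp
  finally show ?thesis .
qed

lemma psimp_cong: "(\<And>a. a \<in> B \<Longrightarrow> y a = y' a) \<Longrightarrow> a \<in> B \<Longrightarrow> psimp B y a = psimp B y' a"
proof -
  assume h: "\<And>a. a \<in> B \<Longrightarrow> y a = y' a" and a: "a \<in> B"
  have "tau B y = tau B y'" unfolding tau_def
    by (rule arg_cong[where f=Eps]) (rule ext, simp add: h cong: sum.cong)
  then show ?thesis unfolding psimp_def using h[OF a] by simp
qed

context mg begin

definition pj :: "('s,'a) pol \<Rightarrow> ('s,'a) pol" where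
  "pj y = (\<lambda>i s a. if i < n \<and> s \<in> S \<and> a \<in> A i then psimp (A i) (y i s) a else 0)"

lemma pj_polX: "pj y \<in> polX G"
proof -
  have "pol_i G i (pj y i)" if i: "i < n" for i
  proof -
    have "(\<Sum>a\<in>A i. pj y i s a) = 1" if s: "s \<in> S" for s
    proof -
      have "(\<Sum>a\<in>A i. pj y i s a) = (\<Sum>a\<in>A i. psimp (A i) (y i s) a)"
        by (intro sum.cong refl) (simp add: pj_def i s)
      then show ?thesis using psimp_sum[OF finA[OF i] A_ne[OF i]] by simp
    qed
    then show ?thesis unfolding pol_i_def by (auto simp: pj_def psimp_nn)
  qed
  then show ?thesis unfolding polX_def by (auto simp: pj_def)
qed

lemma pj_VI: "z \<in> polX G \<Longrightarrow>
  (\<Sum>i<n. \<Sum>s\<in>S. \<Sum>a\<in>A i. (y i s a - pj y i s a) * (z i s a - pj y i s a)) \<le> 0"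
proof -
  assume z: "z \<in> polX G"
  have "(\<Sum>i<n. \<Sum>s\<in>S. \<Sum>a\<in>A i. (y i s a - pj y i s a) * (z i s a - pj y i s a)) \<le> (\<Sum>i<n. \<Sum>s\<in>S. 0)"
  proof (intro sum_mono)
    fix i s assume i: "i \<in> {..<n}" and s: "s \<in> S"
    have "(\<Sum>a\<in>A i. (y i s a - pj y i s a) * (z i s a - pj y i s a)) =
          (\<Sum>a\<in>A i. (y i s a - psimp (A i) (y i s) a) * (z i s a - psimp (A i) (y i s) a))"
      using i s by (intro sum.cong refl) (simp add: pj_def)
    also have "\<dots> \<le> 0"
      using i s by (intro psimp_VI) (auto simp: finA A_ne polX_D[OF z] polX_sum[OF z])
    finally show "(\<Sum>a\<in>A i. (y i s a - pj y i s a) * (z i s a - pj y i s a)) \<le> 0" .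
  qed
  then show ?thesis by simp
qed

lemma sqdist_decomp: "z \<in> polX G \<Longrightarrow> sqdist G z y \<ge> sqdist G (pj y) y + sqdist G z (pj y)"
proof -
  assume z: "z \<in> polX G"
  have "sqdist G z y = sqdist G (pj y) y + sqdist G z (pj y) -
     2 * (\<Sum>i<n. \<Sum>s\<in>S. \<Sum>a\<in>A i. (y i s a - pj y i s a) * (z i s a - pj y i s a))"
  proof -
    have "sqdist G z y = (\<Sum>i<n. \<Sum>s\<in>S. \<Sum>a\<in>A i. ((pj y i s a - y i s a)^2 + (z i s a - pj y i s a)^2 - 2 * ((y i s a - pj y i s a) * (z i s a - pj y i s a))))"
      unfolding sqdist_def by (intro sum.cong refl) (simp add: power2_eq_square algebra_simps)
    then show ?thesis unfolding sqdist_def by (simp only: sum.distrib sum_subtractf sum_distrib_left)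
  qed
  then show ?thesis using pj_VI[OF z] by simp
qed

lemma polX_eqI: "x \<in> polX G \<Longrightarrow> y \<in> polX G \<Longrightarrow>
  (\<And>i s a. i < n \<Longrightarrow> s \<in> S \<Longrightarrow> a \<in> A i \<Longrightarrow> x i s a = y i s a) \<Longrightarrow> x = y"
proof -
  assume x: "x \<in> polX G" and y: "y \<in> polX G" and h: "\<And>i s a. i < n \<Longrightarrow> s \<in> S \<Longrightarrow> a \<in> A i \<Longrightarrow> x i s a = y i s a"
  show "x = y"
  proof (intro ext)
    fix i s a
    show "x i s a = y i s a"
    proof (cases "i < n")
      case True
      then show ?thesis using h[OF True] polX_out[OF x True] polX_out[OF y True] by metis
    next
      case False
      then show ?thesis using x y unfolding polX_def by auto
    qed
  qed
qed

lemma sqdist_nn: "sqdist G x y \<ge> 0"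
  unfolding sqdist_def by (intro sum_nonneg) auto

lemma sqdist_zero: "sqdist G x y \<le> 0 \<Longrightarrow> i < n \<Longrightarrow> s \<in> S \<Longrightarrow> a \<in> A i \<Longrightarrow> x i s a = y i s a"
proof -
  assume h: "sqdist G x y \<le> 0" and i: "i < n" and s: "s \<in> S" and a: "a \<in> A i"
  have "(x i s a - y i s a)^2 \<le> (\<Sum>a\<in>A i. (x i s a - y i s a)^2)"
    by (rule member_le_sum[OF a]) (auto simp: finA[OF i])
  also have "\<dots> \<le> (\<Sum>s\<in>S. \<Sum>a\<in>A i. (x i s a - y i s a)^2)"
    by (rule member_le_sum[OF s, where f="\<lambda>s. \<Sum>a\<in>A i. (x i s a - y i s a)^2"]) (auto intro!: sum_nonneg simp: finS)
  also have "\<dots> \<le> sqdist G x y"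
    unfolding sqdist_def
    by (rule member_le_sum[where f="\<lambda>i. \<Sum>s\<in>S. \<Sum>a\<in>A i. (x i s a - y i s a)^2"]) (auto intro!: sum_nonneg simp: i)
  finally have "(x i s a - y i s a)^2 \<le> 0" using h by linarith
  then show ?thesis by simp
qed

lemma proj_eq: "proj G y = pj y"
  unfolding proj_def
proof (rule the1_equality)
  have min: "\<forall>x'\<in>polX G. sqdist G (pj y) y \<le> sqdist G x' y"
  proof
    fix z assume "z \<in> polX G"
    then show "sqdist G (pj y) y \<le> sqdist G z y" using sqdist_decomp[of z y] sqdist_nn[of z "pj y"] by linarith
  qed
  then show "pj y \<in> polX G \<and> (\<forall>x'\<in>polX G. sqdist G (pj y) y \<le> sqdist G x' y)"
    using pj_polX by blast
  show "\<exists>!x. x \<in> polX G \<and> (\<forall>x'\<in>polX G. sqdist G x y \<le> sqdist G x' y)"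
  proof (rule ex1I[of _ "pj y"])
    show "pj y \<in> polX G \<and> (\<forall>x'\<in>polX G. sqdist G (pj y) y \<le> sqdist G x' y)"
      using pj_polX min by blast
    fix q assume q: "q \<in> polX G \<and> (\<forall>x'\<in>polX G. sqdist G q y \<le> sqdist G x' y)"
    then have "sqdist G q y \<le> sqdist G (pj y) y" using pj_polX by blast
    then have "sqdist G q (pj y) \<le> 0" using sqdist_decomp[of q y] q by linarith
    then show "q = pj y" using q pj_polX by (intro polX_eqI) (auto dest: sqdist_zero)
  qed
qed

lemma proj_polX: "proj G y \<in> polX G"
  using proj_eq pj_polX by simp

lemma proj_cong: "(\<And>i s a. i < n \<Longrightarrow> s \<in> S \<Longrightarrow> a \<in> A i \<Longrightarrow> y i s a = y' i s a) \<Longrightarrow> proj G y = proj G y'"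
  unfolding proj_eq pj_def by (intro ext) (auto intro!: psimp_cong)

lemma proj_block_VI:
  assumes i: "i < n" and s: "s \<in> S" and z: "\<forall>a\<in>A i. z a \<ge> 0" "(\<Sum>a\<in>A i. z a) = 1"
  shows "(\<Sum>a\<in>A i. (y i s a - proj G y i s a) * (z a - proj G y i s a)) \<le> 0"
proof -
  have "(\<Sum>a\<in>A i. (y i s a - proj G y i s a) * (z a - proj G y i s a)) =
        (\<Sum>a\<in>A i. (y i s a - psimp (A i) (y i s) a) * (z a - psimp (A i) (y i s) a))"
    using i s by (intro sum.cong refl) (simp add: proj_eq pj_def)
  also have "\<dots> \<le> 0" using z by (intro psimp_VI) (auto simp: finA[OF i] A_ne[OF i])
  finally show ?thesis .
qed

end


lemma sab1: "(\<And>k. k \<in> I \<Longrightarrow> \<bar>g k\<bar> \<le> B) \<Longrightarrow> \<bar>\<Sum>k\<in>I. f k * g k\<bar> \<le> (\<Sum>k\<in>I. \<bar>f k\<bar>) * (B::real)"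
proof -
  assume h: "\<And>k. k \<in> I \<Longrightarrow> \<bar>g k\<bar> \<le> B"
  have "\<bar>\<Sum>k\<in>I. f k * g k\<bar> \<le> (\<Sum>k\<in>I. \<bar>f k\<bar> * B)"
    by (intro order.trans[OF sum_abs] sum_mono) (simp only: abs_mult, rule mult_left_mono[OF h], auto)
  then show ?thesis by (simp add: sum_distrib_right)
qed

lemma sab2: "(\<And>k. k \<in> I \<Longrightarrow> f k \<ge> 0) \<Longrightarrow> (\<And>k. k \<in> I \<Longrightarrow> \<bar>g k\<bar> \<le> B) \<Longrightarrow> \<bar>\<Sum>k\<in>I. f k * g k\<bar> \<le> (\<Sum>k\<in>I. f k) * (B::real)"
proof -
  assume f: "\<And>k. k \<in> I \<Longrightarrow> f k \<ge> 0" and h: "\<And>k. k \<in> I \<Longrightarrow> \<bar>g k\<bar> \<le> B"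
  have "(\<Sum>k\<in>I. \<bar>f k\<bar>) = (\<Sum>k\<in>I. f k)" using f by (intro sum.cong) auto
  then show ?thesis using sab1[of I g B f, OF h] by simp
qed

definition hf :: "('s,'a) mgame \<Rightarrow> nat \<Rightarrow> ('s,'a) pol \<Rightarrow> ('s,'a) pol" where
  "hf G c x i s a = (if i = c then Qf G x c s a else dvis G x s * Qf G x i s a)"

context mg begin

lemma prob_lip:
  assumes px: "\<And>j b. j < n \<Longrightarrow> b \<in> A j \<Longrightarrow> x j s b \<ge> 0" and py: "\<And>j b. j < n \<Longrightarrow> b \<in> A j \<Longrightarrow> y j s b \<ge> 0"
    and sx: "\<And>j. j < n \<Longrightarrow> (\<Sum>b\<in>A j. x j s b) = 1" and sy: "\<And>j. j < n \<Longrightarrow> (\<Sum>b\<in>A j. y j s b) = 1"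
  shows "(\<Sum>a\<in>J. \<bar>prob_joint G x s a - prob_joint G y s a\<bar>) \<le> (\<Sum>j<n. \<Sum>b\<in>A j. \<bar>x j s b - y j s b\<bar>)"
proof -
  define H where "H k a = (\<Prod>j<n. if j < k then y j s (a j) else x j s (a j))" for k a
  define w where "w k j b = (if j < k then y j s b else if j = k then x j s b - y j s b else x j s b)" for k j b
  have H0: "H 0 a = prob_joint G x s a" for a by (simp add: H_def prob_joint_def)
  have Hn: "H n a = prob_joint G y s a" for a unfolding H_def prob_joint_def by (intro prod.cong) auto
  have Hd: "H k a - H (Suc k) a = (\<Prod>j<n. w k j (a j))" if k: "k < n" for k a
  proof -
    have rest: "(\<Prod>j\<in>{..<n}-{k}. if j < Suc k then y j s (a j) else x j s (a j)) = (\<Prod>j\<in>{..<n}-{k}. if j < k then y j s (a j) else x j s (a j))"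
      "(\<Prod>j\<in>{..<n}-{k}. w k j (a j)) = (\<Prod>j\<in>{..<n}-{k}. if j < k then y j s (a j) else x j s (a j))"
      by (intro prod.cong refl; auto simp: w_def)+
    show ?thesis unfolding H_def
      using k by (simp add: prod.remove[of "{..<n}" k] rest) (simp add: w_def algebra_simps)
  qed
  have tel: "prob_joint G x s a - prob_joint G y s a = (\<Sum>k<n. H k a - H (Suc k) a)" for a
    using sum_lessThan_telescope'[of "\<lambda>k. H k a" n] by (simp add: H0 Hn)
  have wsum: "(\<Sum>a\<in>J. \<bar>\<Prod>j<n. w k j (a j)\<bar>) = (\<Sum>b\<in>A k. \<bar>x k s b - y k s b\<bar>)" if k: "k < n" for k
  proof -
    have "(\<Sum>a\<in>J. \<bar>\<Prod>j<n. w k j (a j)\<bar>) = (\<Prod>j<n. \<Sum>b\<in>A j. \<bar>w k j b\<bar>)"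
      unfolding joint_def abs_prod by (rule prod_sum_PiE[symmetric]) (auto simp: finA)
    also have "\<dots> = (\<Sum>b\<in>A k. \<bar>w k k b\<bar>) * (\<Prod>j\<in>{..<n}-{k}. \<Sum>b\<in>A j. \<bar>w k j b\<bar>)"
      using k by (simp add: prod.remove[of "{..<n}" k])
    also have "(\<Prod>j\<in>{..<n}-{k}. \<Sum>b\<in>A j. \<bar>w k j b\<bar>) = 1"
    proof (intro prod.neutral ballI)
      fix j assume j: "j \<in> {..<n}-{k}"
      show "(\<Sum>b\<in>A j. \<bar>w k j b\<bar>) = 1"
      proof (cases "j < k")
        case True
        then have "(\<Sum>b\<in>A j. \<bar>w k j b\<bar>) = (\<Sum>b\<in>A j. y j s b)" using j py by (intro sum.cong) (auto simp: w_def)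
        then show ?thesis using sy j by simp
      next
        case False
        then have "(\<Sum>b\<in>A j. \<bar>w k j b\<bar>) = (\<Sum>b\<in>A j. x j s b)" using j px by (intro sum.cong) (auto simp: w_def)
        then show ?thesis using sx j by simp
      qed
    qed
    finally show ?thesis by (simp add: w_def)
  qed
  have "(\<Sum>a\<in>J. \<bar>prob_joint G x s a - prob_joint G y s a\<bar>) \<le> (\<Sum>a\<in>J. \<Sum>k<n. \<bar>\<Prod>j<n. w k j (a j)\<bar>)"
    unfolding tel by (intro sum_mono order.trans[OF sum_abs]) (simp add: Hd)
  also have "\<dots> = (\<Sum>k<n. \<Sum>a\<in>J. \<bar>\<Prod>j<n. w k j (a j)\<bar>)" by (rule sum.swap)
  also have "\<dots> = (\<Sum>j<n. \<Sum>b\<in>A j. \<bar>x j s b - y j s b\<bar>)" by (intro sum.cong refl) (simp add: wsum)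
  finally show ?thesis .
qed

definition dl :: "('s,'a) pol \<Rightarrow> ('s,'a) pol \<Rightarrow> 's \<Rightarrow> real" where
  "dl x y s = (\<Sum>j<n. \<Sum>b\<in>A j. \<bar>x j s b - y j s b\<bar>)"

definition Dl :: "('s,'a) pol \<Rightarrow> ('s,'a) pol \<Rightarrow> real" where
  "Dl x y = (\<Sum>s\<in>S. dl x y s)"

lemma dl_nn: "dl x y s \<ge> 0" unfolding dl_def by (intro sum_nonneg) auto

lemma dl_le: "s \<in> S \<Longrightarrow> dl x y s \<le> Dl x y"
  unfolding Dl_def by (rule member_le_sum) (auto simp: dl_nn finS)

lemma Dl_nn: "Dl x y \<ge> 0" unfolding Dl_def by (intro sum_nonneg dl_nn)

lemma ev_sum: "b \<in> A i \<Longrightarrow> i < n \<Longrightarrow> (\<Sum>b'\<in>A i. ev b s b') = 1"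
  unfolding ev_def using finA by (simp add: sum.delta')

lemma L1: "x \<in> polX G \<Longrightarrow> y \<in> polX G \<Longrightarrow> s \<in> S \<Longrightarrow>
  (\<Sum>a\<in>J. \<bar>prob_joint G x s a - prob_joint G y s a\<bar>) \<le> dl x y s"
  unfolding dl_def by (rule prob_lip) (auto simp: polX_D polX_sum)

lemma L1e: "x \<in> polX G \<Longrightarrow> y \<in> polX G \<Longrightarrow> s \<in> S \<Longrightarrow> i < n \<Longrightarrow> b \<in> A i \<Longrightarrow>
  (\<Sum>a\<in>J. \<bar>prob_joint G (x(i:=ev b)) s a - prob_joint G (y(i:=ev b)) s a\<bar>) \<le> dl x y s"
proof -
  assume x: "x \<in> polX G" and y: "y \<in> polX G" and s: "s \<in> S" and i: "i < n" and b: "b \<in> A i"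
  have "(\<Sum>a\<in>J. \<bar>prob_joint G (x(i:=ev b)) s a - prob_joint G (y(i:=ev b)) s a\<bar>) \<le>
     (\<Sum>j<n. \<Sum>b'\<in>A j. \<bar>(x(i:=ev b)) j s b' - (y(i:=ev b)) j s b'\<bar>)"
    by (rule prob_lip) (auto simp: polX_D[OF x] polX_D[OF y] polX_sum[OF x] polX_sum[OF y] s ev_sum[OF b i] ev_def sum.delta' finA b)
  also have "\<dots> \<le> dl x y s" unfolding dl_def by (intro sum_mono) auto
  finally show ?thesis .
qed

lemma prob_ev_nn: "x \<in> polX G \<Longrightarrow> s \<in> S \<Longrightarrow> a \<in> J \<Longrightarrow> prob_joint G (x(i:=ev b)) s a \<ge> 0"
  unfolding prob_joint_def
proof (intro prod_nonneg ballI)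
  fix j assume "x \<in> polX G" "s \<in> S" "a \<in> J" "j \<in> {..<n}"
  then show "0 \<le> (x(i := ev b)) j s (a j)"
    by (cases "j = i") (auto simp: ev_def intro!: polX_D joint_mem)
qed

lemma prob_ev_sum: "x \<in> polX G \<Longrightarrow> s \<in> S \<Longrightarrow> i < n \<Longrightarrow> b \<in> A i \<Longrightarrow> (\<Sum>a\<in>J. prob_joint G (x(i:=ev b)) s a) = 1"
  unfolding prob_sum by (intro prod.neutral) (auto simp: polX_sum ev_sum)

lemma L2: "x \<in> polX G \<Longrightarrow> y \<in> polX G \<Longrightarrow> s \<in> S \<Longrightarrow> i < n \<Longrightarrow>
  \<bar>rew_pol G x i s - rew_pol G y i s\<bar> \<le> dl x y s"
proof -
  assume x: "x \<in> polX G" and y: "y \<in> polX G" and s: "s \<in> S" and i: "i < n"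
  have "\<bar>rew_pol G x i s - rew_pol G y i s\<bar> \<le> (\<Sum>a\<in>J. \<bar>prob_joint G x s a - prob_joint G y s a\<bar>) * 1"
    unfolding rew_pol_def sum_subtractf[symmetric] left_diff_distrib[symmetric]
    by (rule sab1) (rule rew_b[OF i s])
  then show ?thesis using L1[OF x y s] by simp
qed

lemma L3: "x \<in> polX G \<Longrightarrow> y \<in> polX G \<Longrightarrow> s \<in> S \<Longrightarrow>
  (\<Sum>u\<in>S. \<bar>PT x s u - PT y s u\<bar>) \<le> dl x y s"
proof -
  assume x: "x \<in> polX G" and y: "y \<in> polX G" and s: "s \<in> S"
  have "(\<Sum>u\<in>S. \<bar>PT x s u - PT y s u\<bar>) \<le> (\<Sum>u\<in>S. \<Sum>a\<in>J. \<bar>prob_joint G x s a - prob_joint G y s a\<bar> * trans G s a u)"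
    unfolding Ptrans_def sum_subtractf[symmetric]
    by (intro sum_mono order.trans[OF sum_abs]) (auto simp: left_diff_distrib[symmetric] abs_mult trans_nn s intro!: sum_mono)
  also have "\<dots> = (\<Sum>a\<in>J. \<bar>prob_joint G x s a - prob_joint G y s a\<bar> * (\<Sum>u\<in>S. trans G s a u))"
    by (subst sum.swap) (simp add: sum_distrib_left)
  also have "\<dots> \<le> (\<Sum>a\<in>J. \<bar>prob_joint G x s a - prob_joint G y s a\<bar> * 1)"
    using trans_sum[OF s] zeta_pos by (intro sum_mono mult_left_mono) (auto, smt (verit))
  finally show ?thesis using L1[OF x y s] by simp
qed

lemma L4: "x \<in> polX G \<Longrightarrow> y \<in> polX G \<Longrightarrow> s \<in> S \<Longrightarrow> i < n \<Longrightarrow>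
  \<bar>Val G x i s - Val G y i s\<bar> \<le> 2 * Dl x y / \<zeta>^2"
proof -
  assume x: "x \<in> polX G" and y: "y \<in> polX G" and s: "s \<in> S" and i: "i < n"
  note cx = contr_polX[OF x] and cy = contr_polX[OF y]
  define w where "w s' = rew_pol G x i s' - rew_pol G y i s' + (\<Sum>u\<in>S. (PT x s' u - PT y s' u) * Val G y i u)" for s'
  have "Val G x i s - Val G y i s = (\<Sum>s'\<in>S. NN x s s' * rew_pol G x i s') - (\<Sum>s'\<in>S. NN y s s' * rew_pol G y i s')"
    using Val_N[OF cx s] Val_N[OF cy s] by simp
  also have "\<dots> = (\<Sum>s'\<in>S. NN x s s' * (rew_pol G x i s' - rew_pol G y i s' + (\<Sum>u\<in>S. (PT x s' u - PT y s' u) * (\<Sum>v\<in>S. NN y u v * rew_pol G y i v))))"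
    by (rule pd_vec[OF cy cx s])
  also have "\<dots> = (\<Sum>s'\<in>S. NN x s s' * w s')"
    unfolding w_def using Val_N[OF cy] by (intro sum.cong refl arg_cong2[where f="(*)"] arg_cong2[where f="(+)"]) auto
  finally have eq: "Val G x i s - Val G y i s = (\<Sum>s'\<in>S. NN x s s' * w s')" .
  have wb: "\<bar>w s'\<bar> \<le> 2 * Dl x y / \<zeta>" if s': "s' \<in> S" for s'
  proof -
    have "\<bar>\<Sum>u\<in>S. (PT x s' u - PT y s' u) * Val G y i u\<bar> \<le> (\<Sum>u\<in>S. \<bar>PT x s' u - PT y s' u\<bar>) * (1 / \<zeta>)"
      by (rule sab1) (rule Val_b[OF y i])
    also have "\<dots> \<le> dl x y s' * (1 / \<zeta>)"
      using L3[OF x y s'] zeta_pos by (intro mult_right_mono) auto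
    finally have "\<bar>w s'\<bar> \<le> dl x y s' + dl x y s' * (1 / \<zeta>)"
      using L2[OF x y s' i] unfolding w_def by linarith
    also have "\<dots> \<le> Dl x y / \<zeta> + Dl x y / \<zeta>"
    proof -
      have a1: "dl x y s' \<le> dl x y s' / \<zeta>"
        using zeta_pos zeta_le1 dl_nn[of x y s'] by (simp add: le_divide_eq mult_left_le)
      have a2: "dl x y s' / \<zeta> \<le> Dl x y / \<zeta>"
        using dl_le[OF s', of x y] zeta_pos by (simp add: divide_right_mono)
      show ?thesis using a1 a2 by simp
    qed
    finally show ?thesis by simp
  qed
  have "\<bar>Val G x i s - Val G y i s\<bar> \<le> (\<Sum>s'\<in>S. \<bar>NN x s s'\<bar>) * (2 * Dl x y / \<zeta>)"
    unfolding eq by (rule sab1) (rule wb)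
  also have "\<dots> \<le> (1 / \<zeta>) * (2 * Dl x y / \<zeta>)"
    using contr.N_rows[OF cx s] Dl_nn[of x y] zeta_pos
    by (intro mult_right_mono) auto
  finally show ?thesis by (simp add: power2_eq_square)
qed

lemma L5: "x \<in> polX G \<Longrightarrow> y \<in> polX G \<Longrightarrow> s \<in> S \<Longrightarrow> i < n \<Longrightarrow> a \<in> J \<Longrightarrow>
  \<bar>Wf G x i s a - Wf G y i s a\<bar> \<le> 2 * Dl x y / \<zeta>^2"
proof -
  assume x: "x \<in> polX G" and y: "y \<in> polX G" and s: "s \<in> S" and i: "i < n" and a: "a \<in> J"
  have "\<bar>Wf G x i s a - Wf G y i s a\<bar> = \<bar>\<Sum>s'\<in>S. trans G s a s' * (Val G x i s' - Val G y i s')\<bar>"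
    unfolding Wf_def by (simp add: sum_subtractf[symmetric] right_diff_distrib)
  also have "\<dots> \<le> (\<Sum>s'\<in>S. trans G s a s') * (2 * Dl x y / \<zeta>^2)"
    by (rule sab2) (auto intro: trans_nn[OF s a] L4[OF x y _ i])
  also have "\<dots> \<le> 1 * (2 * Dl x y / \<zeta>^2)"
    using trans_sum[OF s a] zeta_pos Dl_nn[of x y]
    by (intro mult_right_mono) auto
  finally show ?thesis by simp
qed

lemma L6: "x \<in> polX G \<Longrightarrow> s \<in> S \<Longrightarrow> i < n \<Longrightarrow> a \<in> J \<Longrightarrow> \<bar>Wf G x i s a\<bar> \<le> 1 / \<zeta>"
proof -
  assume x: "x \<in> polX G" and s: "s \<in> S" and i: "i < n" and a: "a \<in> J"
  have "\<bar>\<Sum>s'\<in>S. trans G s a s' * Val G x i s'\<bar> \<le> (\<Sum>s'\<in>S. trans G s a s') * (1 / \<zeta>)"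
    by (rule sab2) (auto intro: trans_nn[OF s a] Val_b[OF x i])
  also have "\<dots> \<le> (1 - \<zeta>) * (1 / \<zeta>)"
    using trans_sum[OF s a] zeta_pos by (intro mult_right_mono) auto
  finally have "\<bar>Wf G x i s a\<bar> \<le> 1 + (1 - \<zeta>) * (1 / \<zeta>)"
    unfolding Wf_def using rew_b[OF i s a] by linarith
  also have "\<dots> = 1 / \<zeta>" using zeta_pos by (simp add: field_simps)
  finally show ?thesis .
qed

lemma L8: "x \<in> polX G \<Longrightarrow> s \<in> S \<Longrightarrow> i < n \<Longrightarrow> b \<in> A i \<Longrightarrow> \<bar>Qf G x i s b\<bar> \<le> 1 / \<zeta>"
proof -
  assume x: "x \<in> polX G" and s: "s \<in> S" and i: "i < n" and b: "b \<in> A i"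
  have "\<bar>Qf G x i s b\<bar> \<le> (\<Sum>a\<in>J. prob_joint G (x(i:=ev b)) s a) * (1 / \<zeta>)"
    unfolding Qf_def by (rule sab2) (auto intro: prob_ev_nn[OF x s] L6[OF x s i])
  also have "\<dots> = 1 / \<zeta>" using prob_ev_sum[OF x s i b] by simp
  finally show ?thesis .
qed

lemma L7: "x \<in> polX G \<Longrightarrow> y \<in> polX G \<Longrightarrow> s \<in> S \<Longrightarrow> i < n \<Longrightarrow> b \<in> A i \<Longrightarrow>
  \<bar>Qf G x i s b - Qf G y i s b\<bar> \<le> 3 * Dl x y / \<zeta>^2"
proof -
  assume x: "x \<in> polX G" and y: "y \<in> polX G" and s: "s \<in> S" and i: "i < n" and b: "b \<in> A i"
  let ?px = "prob_joint G (x(i:=ev b)) s" and ?py = "prob_joint G (y(i:=ev b)) s"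
  have eq: "Qf G x i s b - Qf G y i s b = (\<Sum>a\<in>J. (?px a - ?py a) * Wf G x i s a) + (\<Sum>a\<in>J. ?py a * (Wf G x i s a - Wf G y i s a))"
    unfolding Qf_def by (simp add: sum_subtractf[symmetric] sum.distrib[symmetric] algebra_simps)
  have t1: "\<bar>\<Sum>a\<in>J. (?px a - ?py a) * Wf G x i s a\<bar> \<le> dl x y s * (1 / \<zeta>)"
  proof -
    have "\<bar>\<Sum>a\<in>J. (?px a - ?py a) * Wf G x i s a\<bar> \<le> (\<Sum>a\<in>J. \<bar>?px a - ?py a\<bar>) * (1 / \<zeta>)"
      by (rule sab1) (rule L6[OF x s i])
    also have "\<dots> \<le> dl x y s * (1 / \<zeta>)"
      using L1e[OF x y s i b] zeta_pos by (intro mult_right_mono) auto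
    finally show ?thesis .
  qed
  have t2: "\<bar>\<Sum>a\<in>J. ?py a * (Wf G x i s a - Wf G y i s a)\<bar> \<le> 2 * Dl x y / \<zeta>^2"
  proof -
    have "\<bar>\<Sum>a\<in>J. ?py a * (Wf G x i s a - Wf G y i s a)\<bar> \<le> (\<Sum>a\<in>J. ?py a) * (2 * Dl x y / \<zeta>^2)"
      by (rule sab2) (auto intro: prob_ev_nn[OF y s] L5[OF x y s i])
    also have "\<dots> = 2 * Dl x y / \<zeta>^2" using prob_ev_sum[OF y s i b] by simp
    finally show ?thesis .
  qed
  have "dl x y s * (1 / \<zeta>) \<le> Dl x y / \<zeta>^2"
  proof -
    have "dl x y s * (1 / \<zeta>) \<le> Dl x y * (1 / \<zeta>)" using dl_le[OF s] zeta_pos by (simp add: divide_right_mono)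
    also have "\<dots> \<le> Dl x y * (1 / \<zeta>^2)"
      using zeta_pos zeta_le1 Dl_nn[of x y] by (intro mult_left_mono) (auto simp: field_simps power2_eq_square)
    finally show ?thesis by simp
  qed
  moreover have "\<bar>Qf G x i s b - Qf G y i s b\<bar> \<le> dl x y s * (1 / \<zeta>) + 2 * Dl x y / \<zeta>^2"
    unfolding eq by (rule order.trans[OF abs_triangle_ineq]) (rule add_mono[OF t1 t2])
  moreover have "Dl x y / \<zeta>^2 + 2 * Dl x y / \<zeta>^2 = 3 * Dl x y / \<zeta>^2" by (simp add: field_simps)
  ultimately show ?thesis by linarith
qed

lemma L9: "x \<in> polX G \<Longrightarrow> y \<in> polX G \<Longrightarrow> s \<in> S \<Longrightarrow> \<bar>dvis G x s - dvis G y s\<bar> \<le> Dl x y / \<zeta>^2"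
proof -
  assume x: "x \<in> polX G" and y: "y \<in> polX G" and s: "s \<in> S"
  note cx = contr_polX[OF x] and cy = contr_polX[OF y]
  have eq: "dvis G x s - dvis G y s = (\<Sum>s1\<in>S. dvis G x s1 * (\<Sum>s2\<in>S. (PT x s1 s2 - PT y s1 s2) * NN y s2 s))"
    unfolding dvis_N[OF cx s] dvis_N[OF cy s]
    by (subst d_diff[OF cy cx s]) (intro sum.cong refl, simp add: dvis_N[OF cx])
  have inner: "\<bar>\<Sum>s2\<in>S. (PT x s1 s2 - PT y s1 s2) * NN y s2 s\<bar> \<le> dl x y s1 * (1 / \<zeta>)" if s1: "s1 \<in> S" for s1
  proof -
    have "\<bar>\<Sum>s2\<in>S. (PT x s1 s2 - PT y s1 s2) * NN y s2 s\<bar> \<le> (\<Sum>s2\<in>S. \<bar>PT x s1 s2 - PT y s1 s2\<bar>) * (1 / \<zeta>)"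
      by (rule sab1) (use contr.N_abs[OF cy _ s] in simp)
    also have "\<dots> \<le> dl x y s1 * (1 / \<zeta>)"
      using L3[OF x y s1] zeta_pos by (intro mult_right_mono) auto
    finally show ?thesis .
  qed
  have "\<bar>dvis G x s - dvis G y s\<bar> \<le> (\<Sum>s1\<in>S. (1 / \<zeta>) * (dl x y s1 * (1 / \<zeta>)))"
    unfolding eq
    by (intro order.trans[OF sum_abs] sum_mono; subst abs_mult; rule mult_mono)
       (auto simp: dvis_nn[OF x] dvis_le[OF x] dl_nn less_imp_le[OF zeta_pos] intro: inner[simplified])
  also have "\<dots> = Dl x y / \<zeta>^2" unfolding Dl_def by (simp add: sum_distrib_left[symmetric] sum_divide_distrib[symmetric] power2_eq_square)
  finally show ?thesis .
qed

lemma L10: "x \<in> polX G \<Longrightarrow> y \<in> polX G \<Longrightarrow> s \<in> S \<Longrightarrow> i < n \<Longrightarrow> a \<in> A i \<Longrightarrow>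
  \<bar>hf G c x i s a - hf G c y i s a\<bar> \<le> 4 * Dl x y / \<zeta>^3"
proof -
  assume x: "x \<in> polX G" and y: "y \<in> polX G" and s: "s \<in> S" and i: "i < n" and a: "a \<in> A i"
  have z3: "Dl x y / \<zeta>^2 \<le> Dl x y / \<zeta>^3"
    using zeta_pos zeta_le1 Dl_nn[of x y] by (intro divide_left_mono) (auto simp: power_decreasing)
  show ?thesis
  proof (cases "i = c")
    case True
    then show ?thesis using L7[OF x y s i a] z3 Dl_nn[of x y] unfolding hf_def by simp
  next
    case False
    have "\<bar>hf G c x i s a - hf G c y i s a\<bar> = \<bar>dvis G x s * (Qf G x i s a - Qf G y i s a) + Qf G y i s a * (dvis G x s - dvis G y s)\<bar>"
      unfolding hf_def using False by (simp add: algebra_simps)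
    also have "\<dots> \<le> (1 / \<zeta>) * (3 * Dl x y / \<zeta>^2) + (1 / \<zeta>) * (Dl x y / \<zeta>^2)"
      unfolding abs_mult[symmetric]
      by (intro order.trans[OF abs_triangle_ineq] add_mono; simp only: abs_mult; intro mult_mono)
         (auto simp: dvis_nn[OF x s] dvis_le[OF x s] L7[OF x y s i a] L8[OF y s i a] L9[OF x y s] less_imp_le[OF zeta_pos])
    also have "\<dots> = 4 * Dl x y / \<zeta>^3" by (simp add: field_simps power2_eq_square power3_eq_cube)
    finally show ?thesis .
  qed
qed

end


lemma mp_cong: "(\<And>u v. u \<in> S \<Longrightarrow> v \<in> S \<Longrightarrow> M u v = M' u v) \<Longrightarrow> s' \<in> S \<Longrightarrow> mp S M h s s' = mp S M' h s s'"
  by (induction h arbitrary: s') auto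

lemma og_block:
  fixes u v w z g g' :: "'a \<Rightarrow> real"
  assumes VI1: "(\<Sum>a\<in>B. (u a + \<eta> * g a - v a) * (z a - v a)) \<le> 0"
    and VI2: "(\<Sum>a\<in>B. (u a + \<eta> * g' a - w a) * (v a - w a)) \<le> 0"
  shows "\<eta> * (\<Sum>a\<in>B. g a * (z a - w a)) \<le>
    (\<Sum>a\<in>B. (u a - z a)^2) / 2 - (\<Sum>a\<in>B. (v a - z a)^2) / 2 - (\<Sum>a\<in>B. (w a - u a)^2) / 2
    - (\<Sum>a\<in>B. (v a - w a)^2) / 4 + \<eta>^2 * (\<Sum>a\<in>B. (g a - g' a)^2)"
proof -
  have pt: "\<eta> * (g a * (z a - w a)) \<le> (u a + \<eta> * g a - v a) * (z a - v a) + (u a + \<eta> * g' a - w a) * (v a - w a)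
     + ((u a - z a)^2 / 2 - (v a - z a)^2 / 2 - (w a - u a)^2 / 2 - (v a - w a)^2 / 4 + \<eta>^2 * (g a - g' a)^2)" for a
  proof -
    have "(u a + \<eta> * g a - v a) * (z a - v a) + (u a + \<eta> * g' a - w a) * (v a - w a)
     + ((u a - z a)^2 / 2 - (v a - z a)^2 / 2 - (w a - u a)^2 / 2 - (v a - w a)^2 / 4 + \<eta>^2 * (g a - g' a)^2)
     - \<eta> * (g a * (z a - w a)) = (\<eta> * (g a - g' a) - (v a - w a) / 2)^2"
      by (simp add: power2_eq_square field_simps)
    then show ?thesis by (smt (verit) zero_le_power2)
  qed
  have "\<eta> * (\<Sum>a\<in>B. g a * (z a - w a)) \<le> (\<Sum>a\<in>B. (u a + \<eta> * g a - v a) * (z a - v a)) + (\<Sum>a\<in>B. (u a + \<eta> * g' a - w a) * (v a - w a))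
     + ((\<Sum>a\<in>B. (u a - z a)^2) / 2 - (\<Sum>a\<in>B. (v a - z a)^2) / 2 - (\<Sum>a\<in>B. (w a - u a)^2) / 2
    - (\<Sum>a\<in>B. (v a - w a)^2) / 4 + \<eta>^2 * (\<Sum>a\<in>B. (g a - g' a)^2))"
    using sum_mono[of B _ _, OF pt]
    by (simp add: sum_distrib_left sum.distrib sum_subtractf sum_divide_distrib)
  then show ?thesis using VI1 VI2 by linarith
qed

locale og = mg +
  fixes c :: nat and \<eta> :: real and x0
  assumes sc: "single_controller G c" and eta: "\<eta> > 0" and x0: "x0 \<in> polX G"
begin

lemma c_lt: "c < n" using sc unfolding single_controller_def by simp

lemma prob_marg: "(\<Sum>a\<in>J. prob_joint G x s a * F (a c)) =
   (\<Sum>b\<in>A c. x c s b * F b) * (\<Prod>j\<in>{..<n}-{c}. \<Sum>b\<in>A j. x j s b)"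
proof -
  define f where "f j b = (if j = c then x c s b * F b else x j s b)" for j b
  have "(\<Sum>a\<in>J. prob_joint G x s a * F (a c)) = (\<Sum>a\<in>J. \<Prod>j<n. f j (a j))"
  proof (intro sum.cong refl)
    fix a assume "a \<in> J"
    have "(\<Prod>j<n. f j (a j)) = f c (a c) * (\<Prod>j\<in>{..<n}-{c}. f j (a j))"
      using c_lt by (simp add: prod.remove[of _ c])
    also have "(\<Prod>j\<in>{..<n}-{c}. f j (a j)) = (\<Prod>j\<in>{..<n}-{c}. x j s (a j))"
      by (intro prod.cong) (auto simp: f_def)
    finally show "prob_joint G x s a * F (a c) = (\<Prod>j<n. f j (a j))"
      unfolding prob_joint_def using c_lt by (simp add: prod.remove[of _ c] f_def)
  qed
  also have "\<dots> = (\<Prod>j<n. \<Sum>b\<in>A j. f j b)"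
    unfolding joint_def by (rule prod_sum_PiE[symmetric]) (auto simp: finA)
  also have "\<dots> = (\<Sum>b\<in>A c. f c b) * (\<Prod>j\<in>{..<n}-{c}. \<Sum>b\<in>A j. f j b)"
    using c_lt by (simp add: prod.remove[of _ c])
  also have "(\<Prod>j\<in>{..<n}-{c}. \<Sum>b\<in>A j. f j b) = (\<Prod>j\<in>{..<n}-{c}. \<Sum>b\<in>A j. x j s b)"
    by (intro prod.cong) (auto simp: f_def)
  finally show ?thesis by (simp add: f_def)
qed

lemma PT_ctrl:
  assumes x: "x \<in> polX G" and y: "y \<in> polX G" and s: "s \<in> S" and s': "s' \<in> S"
    and eq: "\<And>b. b \<in> A c \<Longrightarrow> x c s b = y c s b"
  shows "PT x s s' = PT y s s'"
proof -
  obtain a0 where a0: "a0 \<in> J" using J_ne by blast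
  define F where "F b = trans G s (a0(c := b)) s'" for b
  have tr: "trans G s a s' = F (a c)" if a: "a \<in> J" for a
  proof -
    have ext: "a0(c := a c) \<in> extensional {..<n}"
      using a0 c_lt unfolding joint_def PiE_def extensional_def by auto
    have mem: "\<forall>i\<in>{..<n}. (a0(c := a c)) i \<in> A i" using a a0 joint_mem by auto
    have "a0(c := a c) \<in> J" unfolding joint_def PiE_iff using ext mem by blast
    have "\<forall>s\<in>S. \<forall>a\<in>J. \<forall>b\<in>J. a c = b c \<longrightarrow> (\<forall>s'\<in>S. trans G s a s' = trans G s b s')"
      using sc unfolding single_controller_def by blast
    then have "trans G s a s' = trans G s (a0(c := a c)) s'"
      using s a \<open>a0(c := a c) \<in> J\<close> s' by (metis fun_upd_same)
    then show ?thesis unfolding F_def .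
  qed
  have PTz: "PT z s s' = (\<Sum>b\<in>A c. z c s b * F b)" if z: "z \<in> polX G" for z
  proof -
    have "PT z s s' = (\<Sum>a\<in>J. prob_joint G z s a * F (a c))"
      unfolding Ptrans_def by (intro sum.cong refl arg_cong2[where f="(*)"] tr) 
    also have "\<dots> = (\<Sum>b\<in>A c. z c s b * F b) * (\<Prod>j\<in>{..<n}-{c}. \<Sum>b\<in>A j. z j s b)"
      by (rule prob_marg)
    also have "(\<Prod>j\<in>{..<n}-{c}. \<Sum>b\<in>A j. z j s b) = 1"
      by (intro prod.neutral ballI) (use polX_sum[OF z _ s] in blast)
    finally show ?thesis by simp
  qed
  have "(\<Sum>b\<in>A c. x c s b * F b) = (\<Sum>b\<in>A c. y c s b * F b)"
    by (intro sum.cong refl) (simp add: eq)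
  then show ?thesis using PTz[OF x] PTz[OF y] by simp
qed

lemma dvis_ctrl:
  assumes x: "x \<in> polX G" and y: "y \<in> polX G" and s: "s \<in> S"
    and eq: "\<And>s b. s \<in> S \<Longrightarrow> b \<in> A c \<Longrightarrow> x c s b = y c s b"
  shows "dvis G x s = dvis G y s"
proof -
  have "mpow G x h s0 s = mpow G y h s0 s" for h s0
    unfolding mpow_mp by (rule mp_cong) (auto intro!: PT_ctrl x y eq s)
  then show ?thesis unfolding dvis_def by simp
qed

definition X where "X t = fst (rogd G c \<eta> x0 t)"
definition Xh where "Xh t = snd (rogd G c \<eta> x0 t)"

lemma X0: "X 0 = x0" "Xh 0 = x0" unfolding X_def Xh_def by simp_all

lemma XS: "X (Suc t) = step G c \<eta> (Xh t) (X t)" "Xh (Suc t) = step G c \<eta> (Xh t) (X (Suc t))"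
  unfolding X_def Xh_def by (simp_all add: Let_def)

lemma step_polX: "step G c \<eta> xh xp \<in> polX G"
  unfolding step_def by (rule proj_polX)

lemma X_polX: "X t \<in> polX G"
  by (cases t) (simp only: X0 x0, simp only: XS step_polX)

lemma Xh_polX: "Xh t \<in> polX G"
  by (cases t) (simp only: X0 x0, simp only: XS step_polX)

lemma step_eq: "xp \<in> polX G \<Longrightarrow> step G c \<eta> xh xp = proj G (\<lambda>i s a. xh i s a + \<eta> * hf G c xp i s a)"
  unfolding step_def
proof (rule proj_cong)
  fix i s a assume xp: "xp \<in> polX G" and i: "i < n" and s: "s \<in> S" and a: "a \<in> A i"
  have d: "dvis G xp s > 0" by (rule dvis_pos[OF xp s])
  show "xh i s a - \<eta> * (Aresc G c xp i s a * Fop G xp i s a) = xh i s a + \<eta> * hf G c xp i s a"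
    unfolding Aresc_def Fop_def hf_def grad_formula[OF xp i s a] using d by auto
qed

lemma step_VI:
  assumes xp: "xp \<in> polX G" and i: "i < n" and s: "s \<in> S"
    and z: "\<forall>a\<in>A i. z a \<ge> 0" "(\<Sum>a\<in>A i. z a) = 1"
  shows "(\<Sum>a\<in>A i. (xh i s a + \<eta> * hf G c xp i s a - step G c \<eta> xh xp i s a) * (z a - step G c \<eta> xh xp i s a)) \<le> 0"
  unfolding step_eq[OF xp] using proj_block_VI[OF i s z, of "\<lambda>i s a. xh i s a + \<eta> * hf G c xp i s a"] by simp

end


context mg begin

definition wsq :: "(nat \<Rightarrow> 's \<Rightarrow> real) \<Rightarrow> ('s,'a) pol \<Rightarrow> ('s,'a) pol \<Rightarrow> real" where
  "wsq lam x y = (\<Sum>i<n. \<Sum>s\<in>S. lam i s * (\<Sum>a\<in>A i. (x i s a - y i s a)^2))"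

definition wq :: "(nat \<Rightarrow> 's \<Rightarrow> real) \<Rightarrow> ('s,'a) pol \<Rightarrow> real" where
  "wq lam F = (\<Sum>i<n. \<Sum>s\<in>S. lam i s * (\<Sum>a\<in>A i. F i s a))"

lemma wsq_bounds:
  assumes "\<And>i s. i < n \<Longrightarrow> s \<in> S \<Longrightarrow> m \<le> lam i s" "\<And>i s. i < n \<Longrightarrow> s \<in> S \<Longrightarrow> lam i s \<le> M"
  shows "m * sqdist G x y \<le> wsq lam x y" "wsq lam x y \<le> M * sqdist G x y"
proof -
  have nn: "0 \<le> (\<Sum>a\<in>A i. (x i s a - y i s a)^2)" for i s by (intro sum_nonneg) auto
  show "m * sqdist G x y \<le> wsq lam x y"
    unfolding wsq_def sqdist_def sum_distrib_left
    by (intro sum_mono mult_right_mono assms nn) auto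
  show "wsq lam x y \<le> M * sqdist G x y"
    unfolding wsq_def sqdist_def sum_distrib_left
    by (intro sum_mono mult_right_mono assms nn) auto
qed

lemma sqdist_sym: "sqdist G x y = sqdist G y x"
  unfolding sqdist_def by (simp add: power2_commute)

lemma sqdist_tri: "sqdist G x y \<le> 2 * sqdist G x w + 2 * sqdist G w y"
proof -
  have "(x i s a - y i s a)^2 \<le> 2 * (x i s a - w i s a)^2 + 2 * (w i s a - y i s a)^2" for i s a
  proof -
    have "2 * (x i s a - w i s a)^2 + 2 * (w i s a - y i s a)^2 - (x i s a - y i s a)^2 = (x i s a - 2 * w i s a + y i s a)^2"
      by (simp add: power2_eq_square algebra_simps)
    then show ?thesis by (smt (verit) zero_le_power2)
  qed
  then have "sqdist G x y \<le> (\<Sum>i<n. \<Sum>s\<in>S. \<Sum>a\<in>A i. 2 * (x i s a - w i s a)^2 + 2 * (w i s a - y i s a)^2)"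
    unfolding sqdist_def by (intro sum_mono) auto
  also have "\<dots> = 2 * sqdist G x w + 2 * sqdist G w y"
    unfolding sqdist_def by (simp add: sum.distrib sum_distrib_left)
  finally show ?thesis .
qed

lemma sqdist_polX: "x \<in> polX G \<Longrightarrow> y \<in> polX G \<Longrightarrow> sqdist G x y \<le> 2 * (real n * real (card S))"
proof -
  assume x: "x \<in> polX G" and y: "y \<in> polX G"
  have blk: "(\<Sum>a\<in>A i. (x i s a - y i s a)^2) \<le> 2" if i: "i < n" and s: "s \<in> S" for i s
  proof -
    have "(x i s a - y i s a)^2 \<le> x i s a + y i s a" if a: "a \<in> A i" for a
    proof -
      have x1: "x i s a \<le> 1" using member_le_sum[of a "A i" "x i s"] polX_D[OF x i s] polX_sum[OF x i s] finA[OF i] a by auto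
      have y1: "y i s a \<le> 1" using member_le_sum[of a "A i" "y i s"] polX_D[OF y i s] polX_sum[OF y i s] finA[OF i] a by auto
      have x0: "x i s a \<ge> 0" "y i s a \<ge> 0" using polX_D[OF x i s a] polX_D[OF y i s a] by auto
      have "(x i s a - y i s a)^2 \<le> (x i s a)^2 + (y i s a)^2" using x0 by (simp add: power2_eq_square algebra_simps)
      also have "\<dots> \<le> x i s a + y i s a" using x1 y1 x0 by (intro add_mono) (auto simp: power2_eq_square mult_le_one mult_left_le)
      finally show ?thesis .
    qed
    then have "(\<Sum>a\<in>A i. (x i s a - y i s a)^2) \<le> (\<Sum>a\<in>A i. x i s a + y i s a)" by (intro sum_mono)
    also have "\<dots> = 2" using polX_sum[OF x i s] polX_sum[OF y i s] by (simp add: sum.distrib)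
    finally show ?thesis .
  qed
  have "sqdist G x y \<le> (\<Sum>i<n. \<Sum>s\<in>S. (2::real))" unfolding sqdist_def by (intro sum_mono blk) auto
  then show ?thesis by simp
qed

lemma polX_upd: "x \<in> polX G \<Longrightarrow> y \<in> polX G \<Longrightarrow> i < n \<Longrightarrow> x(i := y i) \<in> polX G"
  unfolding polX_def by auto

lemma polX_upd2: "x \<in> polX G \<Longrightarrow> pol_i G i f \<Longrightarrow> i < n \<Longrightarrow> x(i := f) \<in> polX G"
  unfolding polX_def by auto

end

context og begin

abbreviation "hx t \<equiv> hf G c (X t)"

lemma og_step:
  assumes i: "i < n" and s: "s \<in> S" and z: "\<forall>a\<in>A i. z a \<ge> 0" "(\<Sum>a\<in>A i. z a) = 1"
  shows "\<eta> * (\<Sum>a\<in>A i. hx (Suc t) i s a * (z a - X (Suc t) i s a)) \<le>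
    (\<Sum>a\<in>A i. (Xh t i s a - z a)^2) / 2 - (\<Sum>a\<in>A i. (Xh (Suc t) i s a - z a)^2) / 2
    - (\<Sum>a\<in>A i. (X (Suc t) i s a - Xh t i s a)^2) / 2
    - (\<Sum>a\<in>A i. (Xh (Suc t) i s a - X (Suc t) i s a)^2) / 4 + \<eta>^2 * (\<Sum>a\<in>A i. (hx (Suc t) i s a - hx t i s a)^2)"
proof (rule og_block)
  show "(\<Sum>a\<in>A i. (Xh t i s a + \<eta> * hx (Suc t) i s a - Xh (Suc t) i s a) * (z a - Xh (Suc t) i s a)) \<le> 0"
    unfolding XS(2)[of t] using step_VI[OF X_polX i s z, of "Xh t" "Suc t"] by simp
  have zz: "\<forall>a\<in>A i. Xh (Suc t) i s a \<ge> 0" "(\<Sum>a\<in>A i. Xh (Suc t) i s a) = 1"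
    using polX_D[OF Xh_polX i s] polX_sum[OF Xh_polX i s] by auto
  show "(\<Sum>a\<in>A i. (Xh t i s a + \<eta> * hx t i s a - X (Suc t) i s a) * (Xh (Suc t) i s a - X (Suc t) i s a)) \<le> 0"
    unfolding XS(1)[of t] using step_VI[OF X_polX i s zz, of "Xh t" t] by simp
qed

end


lemma cs_card: "finite I \<Longrightarrow> (\<Sum>k\<in>I. f k)^2 \<le> real (card I) * (\<Sum>k\<in>I. (f k)^2)"
proof -
  assume "finite I"
  have "(\<Sum>k\<in>I. f k * 1)^2 \<le> (\<Sum>k\<in>I. (f k)^2) * (\<Sum>k\<in>I. (1::real)^2)"
    by (rule Cauchy_Schwarz_ineq_sum)
  then show ?thesis by (simp add: mult.commute)
qed

context mg begin

definition Kmax :: real where "Kmax = (\<Sum>i<n. real (card (A i)))"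
definition Kv :: real where "Kv = real (card S) * Kmax"
definition Lsq :: real where "Lsq = 16 * Kv * (real n * Kv) / \<zeta>^6"

lemma cardA_le: "i < n \<Longrightarrow> real (card (A i)) \<le> Kmax"
  unfolding Kmax_def by (rule member_le_sum) auto

lemma Kmax_nn: "Kmax \<ge> 0" unfolding Kmax_def by (intro sum_nonneg) auto

lemma Dl_sq: "(Dl x y)^2 \<le> real n * Kv * sqdist G x y"
proof -
  define d where "d j s = (\<Sum>b\<in>A j. \<bar>x j s b - y j s b\<bar>)" for j s
  have Dl: "Dl x y = (\<Sum>j<n. \<Sum>s\<in>S. d j s)"
    unfolding Dl_def dl_def d_def by (rule sum.swap)
  have blk: "(d j s)^2 \<le> Kmax * (\<Sum>b\<in>A j. (x j s b - y j s b)^2)" if j: "j < n" for j s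
  proof -
    have "(d j s)^2 \<le> real (card (A j)) * (\<Sum>b\<in>A j. \<bar>x j s b - y j s b\<bar>^2)"
      unfolding d_def by (rule cs_card) (simp add: finA j)
    also have "\<dots> \<le> Kmax * (\<Sum>b\<in>A j. (x j s b - y j s b)^2)"
      by (simp add: mult_right_mono cardA_le j sum_nonneg)
    finally show ?thesis .
  qed
  have st: "(\<Sum>s\<in>S. d j s)^2 \<le> real (card S) * Kmax * (\<Sum>s\<in>S. \<Sum>b\<in>A j. (x j s b - y j s b)^2)" if j: "j < n" for j
  proof -
    have "(\<Sum>s\<in>S. d j s)^2 \<le> real (card S) * (\<Sum>s\<in>S. (d j s)^2)" by (rule cs_card[OF finS])
    also have "\<dots> \<le> real (card S) * (\<Sum>s\<in>S. Kmax * (\<Sum>b\<in>A j. (x j s b - y j s b)^2))"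
      by (intro mult_left_mono sum_mono blk j) auto
    finally show ?thesis by (simp add: sum_distrib_left mult.assoc)
  qed
  have "(Dl x y)^2 \<le> real n * (\<Sum>j<n. (\<Sum>s\<in>S. d j s)^2)"
    unfolding Dl using cs_card[of "{..<n}" "\<lambda>j. \<Sum>s\<in>S. d j s"] by simp
  also have "\<dots> \<le> real n * (\<Sum>j<n. real (card S) * Kmax * (\<Sum>s\<in>S. \<Sum>b\<in>A j. (x j s b - y j s b)^2))"
    by (intro mult_left_mono sum_mono st) auto
  also have "\<dots> = real n * Kv * sqdist G x y"
    unfolding Kv_def sqdist_def by (simp add: sum_distrib_left mult.assoc)
  finally show ?thesis .
qed

lemma hf_lip: "x \<in> polX G \<Longrightarrow> y \<in> polX G \<Longrightarrow> sqdist G (hf G c x) (hf G c y) \<le> Lsq * sqdist G x y"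
proof -
  assume x: "x \<in> polX G" and y: "y \<in> polX G"
  define B where "B = 4 * Dl x y / \<zeta>^3"
  have pt: "(hf G c x i s a - hf G c y i s a)^2 \<le> B^2" if "i < n" "s \<in> S" "a \<in> A i" for i s a
  proof -
    have "\<bar>hf G c x i s a - hf G c y i s a\<bar> \<le> B" unfolding B_def by (rule L10[OF x y that(2) that(1) that(3)])
    then show ?thesis by (metis abs_ge_zero order_trans power2_abs power_mono)
  qed
  have "sqdist G (hf G c x) (hf G c y) \<le> (\<Sum>i<n. \<Sum>s\<in>S. \<Sum>a\<in>A i. B^2)"
    unfolding sqdist_def by (intro sum_mono pt) auto
  also have "\<dots> = Kv * B^2" unfolding Kv_def Kmax_def by (simp add: sum_distrib_right sum_distrib_left mult.assoc)
  also have "\<dots> = Kv * 16 / \<zeta>^6 * (Dl x y)^2" unfolding B_def by (simp add: power_divide power_mult_distrib field_simps)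
  also have "\<dots> \<le> Kv * 16 / \<zeta>^6 * (real n * Kv * sqdist G x y)"
    using Kmax_nn zeta_pos by (intro mult_left_mono Dl_sq) (auto simp: Kv_def)
  also have "\<dots> = Lsq * sqdist G x y" unfolding Lsq_def by (simp add: field_simps)
  finally show ?thesis .
qed

lemma hf_bound: "x \<in> polX G \<Longrightarrow> i < n \<Longrightarrow> s \<in> S \<Longrightarrow> a \<in> A i \<Longrightarrow> \<bar>hf G c x i s a\<bar> \<le> 1 / \<zeta>^2"
proof -
  assume x: "x \<in> polX G" and i: "i < n" and s: "s \<in> S" and a: "a \<in> A i"
  have z: "1 / \<zeta> \<le> 1 / \<zeta>^2" using zeta_pos zeta_le1 by (simp add: field_simps power2_eq_square mult_left_le)
  show ?thesis
  proof (cases "i = c")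
    case True then show ?thesis using L8[OF x s i a] z unfolding hf_def by simp
  next
    case False
    have "\<bar>hf G c x i s a\<bar> = dvis G x s * \<bar>Qf G x i s a\<bar>" unfolding hf_def using False dvis_nn[OF x s] by (simp add: abs_mult)
    also have "\<dots> \<le> (1 / \<zeta>) * (1 / \<zeta>)"
      by (intro mult_mono dvis_le[OF x s] L8[OF x s i a]) (auto simp: dvis_nn[OF x s] less_imp_le[OF zeta_pos])
    finally show ?thesis by (simp add: power2_eq_square)
  qed
qed

end


lemma avg_exists:
  fixes f :: "nat \<Rightarrow> real"
  assumes T: "T \<ge> 1" and sum: "(\<Sum>t<T. f t) \<le> B"
  shows "\<exists>t<T. f t \<le> B / real T"
proof (rule ccontr)
  assume "\<not> ?thesis"
  then have lt: "\<And>t. t < T \<Longrightarrow> B / real T < f t" by force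
  have "(\<Sum>t<T. B / real T) < (\<Sum>t<T. f t)"
    using T by (intro sum_strict_mono lt) (auto simp: lessThan_empty_iff)
  then show False using sum T by simp
qed

context mg begin

definition mu :: real where "mu = Min (\<rho> ` S)"

lemma mu_le: "s \<in> S \<Longrightarrow> mu \<le> \<rho> s" unfolding mu_def using finS by simp
lemma mu_pos: "mu > 0" unfolding mu_def using finS S_ne rho_pos by (subst Min_gr_iff) auto
lemma mu_le1: "mu \<le> 1" using S_ne mu_le rho_le1 by (meson all_not_in_conv order_trans)

end

context og begin

lemma regret_wq:
  assumes x: "x \<in> polX G" and xs: "xs \<in> polX G"
  shows "(\<Sum>i<n. Vrho G (x(i := xs i)) i - Vrho G x i) =
    wq (\<lambda>i s. if i = c then dvis G xs s else 1) (\<lambda>i s a. hf G c x i s a * (xs i s a - x i s a))"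
  unfolding wq_def
proof (intro sum.cong refl)
  fix i assume i: "i \<in> {..<n}"
  then have i': "i < n" by simp
  have xu: "x(i := xs i) \<in> polX G" by (rule polX_upd[OF x xs i'])
  have "Vrho G (x(i := xs i)) i - Vrho G x i =
    (\<Sum>s\<in>S. dvis G (x(i := xs i)) s * (\<Sum>b\<in>A i. (xs i s b - x i s b) * Qf G x i s b))"
    by (rule PD_rho[OF contr_polX[OF x] contr_polX[OF xu] i'])
  also have "\<dots> = (\<Sum>s\<in>S. (if i = c then dvis G xs s else 1) * (\<Sum>a\<in>A i. hf G c x i s a * (xs i s a - x i s a)))"
  proof (intro sum.cong refl)
    fix s assume s: "s \<in> S"
    show "dvis G (x(i := xs i)) s * (\<Sum>b\<in>A i. (xs i s b - x i s b) * Qf G x i s b) =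
      (if i = c then dvis G xs s else 1) * (\<Sum>a\<in>A i. hf G c x i s a * (xs i s a - x i s a))"
    proof (cases "i = c")
      case True
      have "dvis G (x(i := xs i)) s = dvis G xs s"
        by (rule dvis_ctrl[OF xu xs s]) (simp add: True)
      then show ?thesis using True by (simp add: hf_def mult.commute)
    next
      case False
      have "dvis G (x(i := xs i)) s = dvis G x s"
        by (rule dvis_ctrl[OF xu x s]) (simp add: False[symmetric])
      then show ?thesis using False by (simp add: hf_def sum_distrib_left mult_ac)
    qed
  qed
  finally show "Vrho G (x(i := xs i)) i - Vrho G x i = (\<Sum>s\<in>S. (if i = c then dvis G xs s else 1) * (\<Sum>a\<in>A i. hf G c x i s a * (xs i s a - x i s a)))" .
qed

lemma og_sum_t:
  assumes lam: "\<And>i s. i < n \<Longrightarrow> s \<in> S \<Longrightarrow> lam i s \<ge> 0" and z: "z \<in> polX G"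
  shows "\<eta> * wq lam (\<lambda>i s a. hx (Suc t) i s a * (z i s a - X (Suc t) i s a)) \<le>
    wsq lam (Xh t) z / 2 - wsq lam (Xh (Suc t)) z / 2 - wsq lam (X (Suc t)) (Xh t) / 2
    - wsq lam (Xh (Suc t)) (X (Suc t)) / 4 + \<eta>^2 * wsq lam (hx (Suc t)) (hx t)"
proof -
  define R where "R i s = (\<Sum>a\<in>A i. (Xh t i s a - z i s a)^2) / 2 - (\<Sum>a\<in>A i. (Xh (Suc t) i s a - z i s a)^2) / 2
    - (\<Sum>a\<in>A i. (X (Suc t) i s a - Xh t i s a)^2) / 2
    - (\<Sum>a\<in>A i. (Xh (Suc t) i s a - X (Suc t) i s a)^2) / 4 + \<eta>^2 * (\<Sum>a\<in>A i. (hx (Suc t) i s a - hx t i s a)^2)" for i s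
  have "\<eta> * wq lam (\<lambda>i s a. hx (Suc t) i s a * (z i s a - X (Suc t) i s a)) =
     (\<Sum>i<n. \<Sum>s\<in>S. lam i s * (\<eta> * (\<Sum>a\<in>A i. hx (Suc t) i s a * (z i s a - X (Suc t) i s a))))"
    unfolding wq_def by (simp add: sum_distrib_left mult_ac)
  also have "\<dots> \<le> (\<Sum>i<n. \<Sum>s\<in>S. lam i s * R i s)"
  proof (intro sum_mono mult_left_mono)
    fix i s assume i: "i \<in> {..<n}" and s: "s \<in> S"
    show "0 \<le> lam i s" using lam i s by simp
    show "\<eta> * (\<Sum>a\<in>A i. hx (Suc t) i s a * (z i s a - X (Suc t) i s a)) \<le> R i s"
      unfolding R_def using i s by (intro og_step) (auto simp: polX_D[OF z] polX_sum[OF z])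
  qed
  also have "\<dots> = wsq lam (Xh t) z / 2 - wsq lam (Xh (Suc t)) z / 2 - wsq lam (X (Suc t)) (Xh t) / 2
    - wsq lam (Xh (Suc t)) (X (Suc t)) / 4 + \<eta>^2 * wsq lam (hx (Suc t)) (hx t)"
    unfolding wsq_def R_def
    by (simp add: sum_distrib_left sum.distrib sum_subtractf sum_divide_distrib right_diff_distrib distrib_left mult_ac)
  finally show ?thesis .
qed

lemma Lsq_nn: "Lsq \<ge> 0"
  unfolding Lsq_def Kv_def using Kmax_nn zeta_pos by (intro divide_nonneg_pos mult_nonneg_nonneg) auto

lemma good_t:
  assumes T: "T \<ge> 1" and h\<eta>: "2 * \<eta>^2 * (1/\<zeta>) * Lsq \<le> mu / 8" and reg: "regret_condition G"
  shows "\<exists>t<T. sqdist G (X (Suc t)) (Xh t) + sqdist G (Xh (Suc t)) (X (Suc t))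
           \<le> 8 * (1/\<zeta>) * (real n * real (card S)) / mu / real T"
proof -
  have "\<forall>t\<in>{1..T}. X t \<in> polX G" using X_polX by blast
  then obtain xs where xs: "xs \<in> polX G" and rg:
    "(\<Sum>t=1..T. \<Sum>i<n. Vrho G ((X t)(i := xs i)) i) - (\<Sum>t=1..T. \<Sum>i<n. Vrho G (X t) i) \<ge> 0"
    using reg[unfolded regret_condition_def, rule_format, of T X] by blast
  define lam where "lam i s = (if i = c then dvis G xs s else 1)" for i s
  define \<Lambda> where "\<Lambda> = 1 / \<zeta>"
  have L1: "1 \<le> \<Lambda>" using zeta_pos zeta_le1 by (simp add: \<Lambda>_def)
  have lamb: "mu \<le> lam i s" "lam i s \<le> \<Lambda>" "0 \<le> lam i s" if "i < n" "s \<in> S" for i s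
    using dvis_ge[OF xs that(2)] dvis_le[OF xs that(2)] mu_le[OF that(2)] mu_le1 mu_pos L1
    by (auto simp: lam_def \<Lambda>_def)
  define Rg where "Rg t = wq lam (\<lambda>i s a. hx (Suc t) i s a * (xs i s a - X (Suc t) i s a))" for t
  have Rsum: "(\<Sum>t<T. Rg t) \<ge> 0"
  proof -
    have "(\<Sum>t=1..T. \<Sum>i<n. Vrho G ((X t)(i := xs i)) i) - (\<Sum>t=1..T. \<Sum>i<n. Vrho G (X t) i)
        = (\<Sum>t=1..T. \<Sum>i<n. Vrho G ((X t)(i := xs i)) i - Vrho G (X t) i)"
      by (simp add: sum_subtractf)
    also have "\<dots> = (\<Sum>t=Suc 0..T. wq lam (\<lambda>i s a. hx t i s a * (xs i s a - X t i s a)))"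
      unfolding lam_def by (intro sum.cong regret_wq[OF X_polX xs]) auto
    also have "\<dots> = (\<Sum>t<T. Rg t)" unfolding Rg_def by (rule sum.atLeast1_atMost_eq)
    finally show ?thesis using rg by simp
  qed
  define a where "a t = sqdist G (X (Suc t)) (Xh t)" for t
  define b where "b t = sqdist G (Xh (Suc t)) (X (Suc t))" for t
  define e where "e t = sqdist G (Xh t) (X t)" for t
  define Dz where "Dz t = wsq lam (Xh t) xs" for t
  define c0 where "c0 = \<eta>^2 * \<Lambda> * Lsq"
  have c0: "2 * c0 \<le> mu / 8" "0 \<le> c0" using h\<eta> Lsq_nn L1 zeta_pos by (auto simp: c0_def \<Lambda>_def mult_ac)
  have step: "\<eta> * Rg t \<le> Dz t / 2 - Dz (Suc t) / 2 + (- (mu * a t / 2) - mu * b t / 4 + c0 * (2 * a t + 2 * e t))" for t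
  proof -
    have w1: "mu * a t \<le> wsq lam (X (Suc t)) (Xh t)" unfolding a_def by (rule wsq_bounds(1)) (use lamb in auto)
    have w2: "mu * b t \<le> wsq lam (Xh (Suc t)) (X (Suc t))" unfolding b_def by (rule wsq_bounds(1)) (use lamb in auto)
    have "wsq lam (hx (Suc t)) (hx t) \<le> \<Lambda> * sqdist G (hx (Suc t)) (hx t)" by (rule wsq_bounds(2)) (use lamb in auto)
    also have "\<dots> \<le> \<Lambda> * (Lsq * sqdist G (X (Suc t)) (X t))"
      using L1 by (intro mult_left_mono hf_lip X_polX) auto
    also have "\<dots> \<le> \<Lambda> * (Lsq * (2 * a t + 2 * e t))"
      unfolding a_def e_def using L1 Lsq_nn by (intro mult_left_mono sqdist_tri) auto
    finally have w3: "\<eta>^2 * wsq lam (hx (Suc t)) (hx t) \<le> c0 * (2 * a t + 2 * e t)"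
      unfolding c0_def by (simp add: mult_left_mono mult.assoc)
    show ?thesis using og_sum_t[where lam=lam and z=xs and t=t, OF lamb(3) xs] w1 w2 w3 unfolding Rg_def Dz_def by linarith
  qed
  have tot: "(\<Sum>t<T'. \<eta> * Rg t) \<le> Dz 0 / 2 - Dz T' / 2 + (\<Sum>t<T'. - (mu * a t / 2) - mu * b t / 4 + c0 * (2 * a t + 2 * e t))" for T'
  proof (induction T')
    case (Suc T')
    then show ?case using step[of T'] by simp
  qed simp
  have e0: "e 0 = 0" unfolding e_def X0 sqdist_def by simp
  have esum: "(\<Sum>t<T. e t) \<le> (\<Sum>t<T. b t)"
  proof -
    obtain T' where T': "T = Suc T'" using T by (cases T) auto
    have "(\<Sum>t<T. e t) = (\<Sum>t<T'. b t)" unfolding T' sum.lessThan_Suc_shift e0 by (simp add: e_def b_def)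
    also have "\<dots> \<le> (\<Sum>t<T. b t)" unfolding T' using sqdist_nn by (simp add: b_def)
    finally show ?thesis .
  qed
  have a_nn: "(\<Sum>t<T. a t) \<ge> 0" and b_nn: "(\<Sum>t<T. b t) \<ge> 0" unfolding a_def b_def by (auto intro!: sum_nonneg sqdist_nn)
  have Dz0: "Dz 0 \<le> \<Lambda> * (2 * (real n * real (card S)))"
  proof -
    have "Dz 0 \<le> \<Lambda> * sqdist G x0 xs" unfolding Dz_def X0 by (rule wsq_bounds(2)) (use lamb in auto)
    also have "\<dots> \<le> \<Lambda> * (2 * (real n * real (card S)))" using L1 by (intro mult_left_mono sqdist_polX x0 xs) auto
    finally show ?thesis .
  qed
  have DzT: "Dz T \<ge> 0"
  proof -
    have "mu * sqdist G (Xh T) xs \<le> Dz T" unfolding Dz_def by (rule wsq_bounds(1)) (use lamb in auto)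
    moreover have "mu * sqdist G (Xh T) xs \<ge> 0" using mu_pos sqdist_nn by simp
    ultimately show ?thesis by linarith
  qed
  have "0 \<le> \<eta> * (\<Sum>t<T. Rg t)" using eta Rsum by simp
  also have "\<dots> = (\<Sum>t<T. \<eta> * Rg t)" by (simp add: sum_distrib_left)
  also have "\<dots> \<le> Dz 0 / 2 - Dz T / 2 + (\<Sum>t<T. - (mu * a t / 2) - mu * b t / 4 + c0 * (2 * a t + 2 * e t))" by (rule tot)
  also have "(\<Sum>t<T. - (mu * a t / 2) - mu * b t / 4 + c0 * (2 * a t + 2 * e t)) =
     - (mu / 2) * (\<Sum>t<T. a t) - (mu / 4) * (\<Sum>t<T. b t) + 2 * c0 * (\<Sum>t<T. a t) + 2 * c0 * (\<Sum>t<T. e t)"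
    by (simp add: sum.distrib sum_subtractf sum_distrib_left sum_divide_distrib algebra_simps)
  finally have main: "0 \<le> Dz 0 / 2 - Dz T / 2 - (mu / 2) * (\<Sum>t<T. a t) - (mu / 4) * (\<Sum>t<T. b t) + 2 * c0 * (\<Sum>t<T. a t) + 2 * c0 * (\<Sum>t<T. e t)"
    by linarith
  have m1: "2 * c0 * (\<Sum>t<T. a t) \<le> mu / 8 * (\<Sum>t<T. a t)" using c0 a_nn by (intro mult_right_mono) auto
  have m2: "2 * c0 * (\<Sum>t<T. e t) \<le> mu / 8 * (\<Sum>t<T. b t)"
  proof -
    have "2 * c0 * (\<Sum>t<T. e t) \<le> 2 * c0 * (\<Sum>t<T. b t)" using c0 esum by (intro mult_left_mono) auto
    also have "\<dots> \<le> mu / 8 * (\<Sum>t<T. b t)" using c0 b_nn by (intro mult_right_mono) auto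
    finally show ?thesis .
  qed
  have m3: "mu / 8 * (\<Sum>t<T. a t) \<le> 3 * mu / 8 * (\<Sum>t<T. a t)" using mu_pos a_nn by (intro mult_right_mono) auto
  have "mu / 8 * ((\<Sum>t<T. a t) + (\<Sum>t<T. b t)) \<le> \<Lambda> * (real n * real (card S))"
    using main m1 m2 m3 Dz0 DzT by (simp add: algebra_simps) 
  then have "(\<Sum>t<T. a t + b t) \<le> 8 * \<Lambda> * (real n * real (card S)) / mu"
    using mu_pos by (simp add: sum.distrib field_simps)
  from avg_exists[OF T this] show ?thesis unfolding a_def b_def \<Lambda>_def by simp
qed

end


lemma cs_sqrt: "(\<Sum>k\<in>I. p k * q k) \<le> sqrt (\<Sum>k\<in>I. (p k)^2) * sqrt (\<Sum>k\<in>I. (q k :: real)^2)"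
proof -
  have "(\<Sum>k\<in>I. p k * q k)^2 \<le> (\<Sum>k\<in>I. (p k)^2) * (\<Sum>k\<in>I. (q k)^2)" by (rule Cauchy_Schwarz_ineq_sum)
  then have "sqrt ((\<Sum>k\<in>I. p k * q k)^2) \<le> sqrt ((\<Sum>k\<in>I. (p k)^2) * (\<Sum>k\<in>I. (q k)^2))" by (rule real_sqrt_le_mono)
  then show ?thesis by (simp add: real_sqrt_mult)
qed

context mg begin

lemma block_le: "i < n \<Longrightarrow> s \<in> S \<Longrightarrow> (\<Sum>a\<in>A i. (x i s a - y i s a)^2) \<le> sqdist G x y"
proof -
  assume i: "i < n" and s: "s \<in> S"
  have "(\<Sum>a\<in>A i. (x i s a - y i s a)^2) \<le> (\<Sum>s\<in>S. \<Sum>a\<in>A i. (x i s a - y i s a)^2)"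
    by (rule member_le_sum[OF s, where f="\<lambda>s. \<Sum>a\<in>A i. (x i s a - y i s a)^2"]) (auto intro!: sum_nonneg simp: finS)
  also have "\<dots> \<le> sqdist G x y"
    unfolding sqdist_def
    by (rule member_le_sum[where f="\<lambda>i. \<Sum>s\<in>S. \<Sum>a\<in>A i. (x i s a - y i s a)^2"]) (auto intro!: sum_nonneg simp: i)
  finally show ?thesis .
qed

lemma block_polX: "x \<in> polX G \<Longrightarrow> i < n \<Longrightarrow> s \<in> S \<Longrightarrow> (\<forall>a\<in>A i. z a \<ge> 0) \<Longrightarrow> (\<Sum>a\<in>A i. z a) = 1 \<Longrightarrow>
  (\<Sum>a\<in>A i. (z a - x i s a)^2) \<le> 2"
proof -
  assume x: "x \<in> polX G" and i: "i < n" and s: "s \<in> S" and z: "\<forall>a\<in>A i. z a \<ge> 0" "(\<Sum>a\<in>A i. z a) = 1"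
  have "(z a - x i s a)^2 \<le> z a + x i s a" if a: "a \<in> A i" for a
  proof -
    have x1: "x i s a \<le> 1" using member_le_sum[of a "A i" "x i s"] polX_D[OF x i s] polX_sum[OF x i s] finA[OF i] a by auto
    have z1: "z a \<le> 1" using member_le_sum[of a "A i" z] z finA[OF i] a by auto
    have x0: "x i s a \<ge> 0" "z a \<ge> 0" using polX_D[OF x i s a] z a by auto
    have "(z a - x i s a)^2 \<le> (z a)^2 + (x i s a)^2" using x0 by (simp add: power2_eq_square algebra_simps)
    also have "\<dots> \<le> z a + x i s a" using x1 z1 x0 by (intro add_mono) (auto simp: power2_eq_square mult_le_one mult_left_le)
    finally show ?thesis .
  qed
  then have "(\<Sum>a\<in>A i. (z a - x i s a)^2) \<le> (\<Sum>a\<in>A i. z a + x i s a)" by (intro sum_mono)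
  also have "\<dots> = 2" using polX_sum[OF x i s] z by (simp add: sum.distrib)
  finally show ?thesis .
qed

end

context og begin

lemma block_gap:
  assumes dl: "sqdist G (X (Suc t)) (Xh t) + sqdist G (Xh (Suc t)) (X (Suc t)) \<le> \<delta>"
    and i: "i < n" and s: "s \<in> S" and z: "\<forall>a\<in>A i. z a \<ge> 0" "(\<Sum>a\<in>A i. z a) = 1"
  shows "(\<Sum>a\<in>A i. hx (Suc t) i s a * (z a - X (Suc t) i s a)) \<le> (2 / \<eta> + sqrt Kmax / \<zeta>^2) * sqrt \<delta>"
proof -
  let ?u = "Xh t i s" and ?v = "Xh (Suc t) i s" and ?w = "X (Suc t) i s" and ?g = "hx (Suc t) i s"
  have d0: "\<delta> \<ge> 0" using dl sqdist_nn[of "X (Suc t)" "Xh t"] sqdist_nn[of "Xh (Suc t)" "X (Suc t)"] by linarith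
  have VI: "(\<Sum>a\<in>A i. (?u a + \<eta> * ?g a - ?v a) * (z a - ?v a)) \<le> 0"
    unfolding XS(2)[of t] using step_VI[OF X_polX i s z, of "Xh t" "Suc t"] by simp
  have eq: "(\<Sum>a\<in>A i. (?u a + \<eta> * ?g a - ?v a) * (z a - ?v a)) = \<eta> * (\<Sum>a\<in>A i. ?g a * (z a - ?v a)) - (\<Sum>a\<in>A i. (?v a - ?u a) * (z a - ?v a))"
    by (simp add: sum_distrib_left sum_subtractf[symmetric] algebra_simps)
  have vu: "(\<Sum>a\<in>A i. (?v a - ?u a)^2) \<le> 2 * \<delta>"
  proof -
    have "(\<Sum>a\<in>A i. (?v a - ?u a)^2) \<le> sqdist G (Xh (Suc t)) (Xh t)" by (rule block_le[OF i s])
    also have "\<dots> \<le> 2 * sqdist G (Xh (Suc t)) (X (Suc t)) + 2 * sqdist G (X (Suc t)) (Xh t)" by (rule sqdist_tri)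
    finally show ?thesis using dl by linarith
  qed
  have zv: "(\<Sum>a\<in>A i. (z a - ?v a)^2) \<le> 2" by (rule block_polX[OF Xh_polX i s z])
  have t1: "(\<Sum>a\<in>A i. (?v a - ?u a) * (z a - ?v a)) \<le> 2 * sqrt \<delta>"
  proof -
    have "(\<Sum>a\<in>A i. (?v a - ?u a) * (z a - ?v a)) \<le> sqrt (\<Sum>a\<in>A i. (?v a - ?u a)^2) * sqrt (\<Sum>a\<in>A i. (z a - ?v a)^2)"
      by (rule cs_sqrt)
    also have "\<dots> \<le> sqrt (2 * \<delta>) * sqrt 2"
      using d0 by (intro mult_mono real_sqrt_le_mono vu zv) (auto intro!: sum_nonneg)
    also have "\<dots> = 2 * sqrt \<delta>" by (simp add: real_sqrt_mult)
    finally show ?thesis .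
  qed
  have gb: "(\<Sum>a\<in>A i. (?g a)^2) \<le> Kmax / \<zeta>^4"
  proof -
    have "(\<Sum>a\<in>A i. (?g a)^2) \<le> (\<Sum>a\<in>A i. (1 / \<zeta>^2)^2)"
    proof (intro sum_mono)
      fix a assume a: "a \<in> A i"
      have "\<bar>?g a\<bar> \<le> 1 / \<zeta>^2" by (rule hf_bound[OF X_polX i s a])
      then show "(?g a)^2 \<le> (1 / \<zeta>^2)^2" by (metis abs_ge_zero order_trans power2_abs power_mono)
    qed
    also have "\<dots> = real (card (A i)) / \<zeta>^4" by (simp add: power_divide power_mult[symmetric])
    also have "\<dots> \<le> Kmax / \<zeta>^4" using zeta_pos by (intro divide_right_mono cardA_le i) auto
    finally show ?thesis .
  qed
  have t2: "(\<Sum>a\<in>A i. ?g a * (?v a - ?w a)) \<le> sqrt Kmax / \<zeta>^2 * sqrt \<delta>"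
  proof -
    have "(\<Sum>a\<in>A i. ?g a * (?v a - ?w a)) \<le> sqrt (\<Sum>a\<in>A i. (?g a)^2) * sqrt (\<Sum>a\<in>A i. (?v a - ?w a)^2)"
      by (rule cs_sqrt)
    also have "\<dots> \<le> sqrt (Kmax / \<zeta>^4) * sqrt \<delta>"
    proof (intro mult_mono real_sqrt_le_mono gb)
      have "(\<Sum>a\<in>A i. (?v a - ?w a)^2) \<le> sqdist G (Xh (Suc t)) (X (Suc t))" by (rule block_le[OF i s])
      then show "(\<Sum>a\<in>A i. (?v a - ?w a)^2) \<le> \<delta>" using dl sqdist_nn[of "X (Suc t)" "Xh t"] by linarith
    qed (use Kmax_nn zeta_pos in \<open>auto intro!: sum_nonneg\<close>)
    also have "sqrt (Kmax / \<zeta>^4) = sqrt Kmax / \<zeta>^2"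
    proof -
      have "\<zeta>^4 = (\<zeta>^2)^2" by simp
      then have "sqrt (\<zeta>^4) = \<zeta>^2" using zeta_pos by (simp only: real_sqrt_abs) simp
      then show ?thesis by (simp add: real_sqrt_divide)
    qed
    finally show ?thesis .
  qed
  have "\<eta> * (\<Sum>a\<in>A i. ?g a * (z a - ?v a)) \<le> 2 * sqrt \<delta>" using VI eq t1 by linarith
  then have t1': "(\<Sum>a\<in>A i. ?g a * (z a - ?v a)) \<le> 2 / \<eta> * sqrt \<delta>"
    using eta by (simp add: field_simps mult.commute)
  have "(\<Sum>a\<in>A i. ?g a * (z a - ?w a)) = (\<Sum>a\<in>A i. ?g a * (z a - ?v a)) + (\<Sum>a\<in>A i. ?g a * (?v a - ?w a))"
    by (simp add: sum.distrib[symmetric] algebra_simps)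
  also have "\<dots> \<le> 2 / \<eta> * sqrt \<delta> + sqrt Kmax / \<zeta>^2 * sqrt \<delta>" using t1' t2 by linarith
  finally show ?thesis by (simp add: distrib_right)
qed

lemma ne_at:
  assumes dl: "sqdist G (X (Suc t)) (Xh t) + sqdist G (Xh (Suc t)) (X (Suc t)) \<le> \<delta>"
  shows "is_eps_NE G (real (card S) / \<zeta> * ((2 / \<eta> + sqrt Kmax / \<zeta>^2) * sqrt \<delta>)) (X (Suc t))"
proof -
  define w where "w = X (Suc t)"
  define \<Gamma> where "\<Gamma> = (2 / \<eta> + sqrt Kmax / \<zeta>^2) * sqrt \<delta>"
  have w: "w \<in> polX G" unfolding w_def by (rule X_polX)
  have d0: "\<delta> \<ge> 0" using dl sqdist_nn[of "X (Suc t)" "Xh t"] sqdist_nn[of "Xh (Suc t)" "X (Suc t)"] by linarith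
  have G0: "\<Gamma> \<ge> 0" unfolding \<Gamma>_def using eta zeta_pos Kmax_nn d0 by (intro mult_nonneg_nonneg add_nonneg_nonneg) auto
  have cS: "real (card S) \<ge> 1" using finS S_ne by (simp add: Suc_le_eq card_gt_0_iff)
  have iz: "1 / \<zeta> \<ge> 1" using zeta_pos zeta_le1 by simp
  have bound: "Vrho G (w(i := y)) i - Vrho G w i \<le> real (card S) / \<zeta> * \<Gamma>" if i: "i < n" and y: "pol_i G i y" for i y
  proof -
    have wy: "w(i := y) \<in> polX G" by (rule polX_upd2[OF w y i])
    have yb: "\<forall>a\<in>A i. y s a \<ge> 0" "(\<Sum>a\<in>A i. y s a) = 1" if "s \<in> S" for s
      using y that unfolding pol_i_def by auto
    have gap: "(\<Sum>a\<in>A i. hf G c w i s a * (y s a - w i s a)) \<le> \<Gamma>" if s: "s \<in> S" for s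
      unfolding w_def \<Gamma>_def by (rule block_gap[OF dl i s yb[OF s]])
    have PD: "Vrho G (w(i := y)) i - Vrho G w i = (\<Sum>s\<in>S. dvis G (w(i := y)) s * (\<Sum>b\<in>A i. (y s b - w i s b) * Qf G w i s b))"
      using PD_rho[OF contr_polX[OF w] contr_polX[OF wy] i] by simp
    show ?thesis
    proof (cases "i = c")
      case True
      have "(\<Sum>s\<in>S. dvis G (w(i := y)) s * (\<Sum>b\<in>A i. (y s b - w i s b) * Qf G w i s b)) \<le> (\<Sum>s\<in>S. dvis G (w(i := y)) s * \<Gamma>)"
      proof (intro sum_mono mult_left_mono)
        fix s assume s: "s \<in> S"
        show "(\<Sum>b\<in>A i. (y s b - w i s b) * Qf G w i s b) \<le> \<Gamma>"
          using gap[OF s] True by (simp add: hf_def mult.commute)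
        show "0 \<le> dvis G (w(i := y)) s" by (rule dvis_nn[OF wy s])
      qed
      also have "\<dots> = (\<Sum>s\<in>S. dvis G (w(i := y)) s) * \<Gamma>" by (simp add: sum_distrib_right)
      also have "\<dots> \<le> (1 / \<zeta>) * \<Gamma>" by (intro mult_right_mono dvis_sum wy G0)
      also have "\<dots> \<le> real (card S) / \<zeta> * \<Gamma>"
        using cS zeta_pos G0 by (intro mult_right_mono) (auto simp: divide_right_mono)
      finally show ?thesis using PD by simp
    next
      case False
      have "(\<Sum>s\<in>S. dvis G (w(i := y)) s * (\<Sum>b\<in>A i. (y s b - w i s b) * Qf G w i s b)) = (\<Sum>s\<in>S. \<Sum>a\<in>A i. hf G c w i s a * (y s a - w i s a))"
      proof (intro sum.cong refl)
        fix s assume s: "s \<in> S"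
        have "dvis G (w(i := y)) s = dvis G w s" by (rule dvis_ctrl[OF wy w s]) (simp add: False[symmetric])
        then show "dvis G (w(i := y)) s * (\<Sum>b\<in>A i. (y s b - w i s b) * Qf G w i s b) = (\<Sum>a\<in>A i. hf G c w i s a * (y s a - w i s a))"
          using False by (simp add: hf_def sum_distrib_left mult_ac)
      qed
      also have "\<dots> \<le> (\<Sum>s\<in>S. \<Gamma>)" by (intro sum_mono gap)
      also have "\<dots> = real (card S) * \<Gamma>" by simp
      also have "\<dots> \<le> real (card S) / \<zeta> * \<Gamma>"
        using cS iz G0 by (intro mult_right_mono) (auto simp: le_divide_eq zeta_pos mult_left_le)
      finally show ?thesis using PD by simp
    qed
  qed
  have "BRval G w i - Vrho G w i \<le> real (card S) / \<zeta> * \<Gamma>" if i: "i < n" for i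
  proof -
    have ne: "{y. pol_i G i y} \<noteq> {}" using w i unfolding polX_def by auto
    have "BRval G w i \<le> Vrho G w i + real (card S) / \<zeta> * \<Gamma>"
      unfolding BRval_def using bound[OF i] ne by (intro cSup_least) (auto, smt (verit))
    then show ?thesis by simp
  qed
  then show ?thesis unfolding is_eps_NE_def \<Gamma>_def w_def using X_polX by auto
qed

end


context mg begin

definition detp :: "nat \<Rightarrow> ('s \<Rightarrow> 'a) \<Rightarrow> 's \<Rightarrow> 'a \<Rightarrow> real" where
  "detp i f = (\<lambda>s a. if s \<in> S \<and> a \<in> A i \<and> f s = a then 1 else 0)"

lemma detp_sum: "i < n \<Longrightarrow> f \<in> PiE S (\<lambda>_. A i) \<Longrightarrow> s \<in> S \<Longrightarrow>
  (\<Sum>b\<in>A i. detp i f s b * q b) = q (f s)"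
proof -
  assume i: "i < n" and f: "f \<in> PiE S (\<lambda>_. A i)" and s: "s \<in> S"
  have fs: "f s \<in> A i" using PiE_mem[OF f s] .
  have "(\<Sum>b\<in>A i. detp i f s b * q b) = (\<Sum>b\<in>A i. if b = f s then q b else 0)"
    by (intro sum.cong refl) (auto simp: detp_def s)
  also have "\<dots> = q (f s)" using fs finA[OF i] by (simp add: sum.delta')
  finally show ?thesis .
qed

lemma detp_pol: "i < n \<Longrightarrow> f \<in> PiE S (\<lambda>_. A i) \<Longrightarrow> pol_i G i (detp i f)"
proof -
  assume i: "i < n" and f: "f \<in> PiE S (\<lambda>_. A i)"
  have "(\<Sum>a\<in>A i. detp i f s a) = 1" if s: "s \<in> S" for s
    using detp_sum[OF i f s, of "\<lambda>_. 1"] by simp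
  then show ?thesis unfolding pol_i_def by (auto simp: detp_def)
qed

lemma br_exists:
  assumes x: "x \<in> polX G" and i: "i < n"
  shows "\<exists>y. pol_i G i y \<and> (\<forall>y'. pol_i G i y' \<longrightarrow> Vrho G (x(i := y')) i \<le> Vrho G (x(i := y)) i)"
proof -
  define D where "D = PiE S (\<lambda>_. A i)"
  have finD: "finite D" unfolding D_def using finS finA[OF i] by (intro finite_PiE) auto
  have neD: "D \<noteq> {}" unfolding D_def using A_ne[OF i] by (auto simp: PiE_eq_empty_iff)
  define \<Phi> where "\<Phi> f = (\<Sum>s\<in>S. Val G (x(i := detp i f)) i s)" for f
  obtain fs where fs: "fs \<in> D" and fmax: "\<And>g. g \<in> D \<Longrightarrow> \<Phi> g \<le> \<Phi> fs"
  proof -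
    have "Max (\<Phi> ` D) \<in> \<Phi> ` D" using finD neD by (intro Max_in) auto
    then obtain fs where "fs \<in> D" "\<Phi> fs = Max (\<Phi> ` D)" by auto
    then show ?thesis using that finD by (metis Max_ge finite_imageI image_eqI)
  qed
  define ys where "ys = detp i fs"
  define xs where "xs = x(i := ys)"
  have ysp: "pol_i G i ys" unfolding ys_def using detp_pol[OF i] fs D_def by simp
  have xs: "xs \<in> polX G" unfolding xs_def by (rule polX_upd2[OF x ysp i])
  note cxs = contr_polX[OF xs]
  define Q where "Q s b = Qf G xs i s b" for s b
  have PDs: "Val G (x(i := y)) i s - Val G xs i s = (\<Sum>s'\<in>S. NN (x(i := y)) s s' * (\<Sum>b\<in>A i. (y s' b - ys s' b) * Q s' b))"
    if y: "pol_i G i y" and s: "s \<in> S" for y s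
  proof -
    have xy: "x(i := y) \<in> polX G" by (rule polX_upd2[OF x y i])
    have e: "xs(i := y) = x(i := y)" unfolding xs_def by simp
    have xsi: "xs i = ys" unfolding xs_def by simp
    have "Val G (xs(i := y)) i s - Val G xs i s = (\<Sum>s'\<in>S. NN (xs(i := y)) s s' * (\<Sum>b\<in>A i. (y s' b - xs i s' b) * Qf G xs i s' b))"
      by (rule PD_state[OF cxs contr_polX[OF xy[folded e]] i s])
    then show ?thesis unfolding e xsi Q_def .
  qed
  have greedy: "Q s b \<le> Q s (fs s)" if s: "s \<in> S" and b: "b \<in> A i" for s b
  proof (rule ccontr)
    assume "\<not> ?thesis"
    then have gt: "Q s b - Q s (fs s) > 0" by simp
    define f' where "f' = fs(s := b)"
    have "fs(s := b) \<in> PiE (insert s S) (\<lambda>_. A i)" by (rule PiE_fun_upd[OF b fs[unfolded D_def]])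
    then have f': "f' \<in> D" unfolding f'_def D_def using s by (simp add: insert_absorb)
    have yp: "pol_i G i (detp i f')" using detp_pol[OF i] f' D_def by simp
    have xy: "x(i := detp i f') \<in> polX G" by (rule polX_upd2[OF x yp i])
    have inner: "(\<Sum>b'\<in>A i. (detp i f' s' b' - ys s' b') * Q s' b') = (if s' = s then Q s b - Q s (fs s) else 0)"
      if s': "s' \<in> S" for s'
    proof -
      have "(\<Sum>b'\<in>A i. (detp i f' s' b' - ys s' b') * Q s' b') = (\<Sum>b'\<in>A i. detp i f' s' b' * Q s' b') - (\<Sum>b'\<in>A i. ys s' b' * Q s' b')"
        by (simp add: left_diff_distrib sum_subtractf)
      also have "\<dots> = Q s' (f' s') - Q s' (fs s')"
        unfolding ys_def using detp_sum[OF i f'[unfolded D_def] s'] detp_sum[OF i fs[unfolded D_def] s'] by simp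
      finally show ?thesis by (simp add: f'_def)
    qed
    have diff: "Val G (x(i := detp i f')) i s'' - Val G xs i s'' = NN (x(i := detp i f')) s'' s * (Q s b - Q s (fs s))"
      if s'': "s'' \<in> S" for s''
      unfolding PDs[OF yp s''] using finS s by (simp add: inner sum_ind_c cong: sum.cong)
    note cy = contr_polX[OF xy]
    have nn: "NN (x(i := detp i f')) s'' s \<ge> 0" if "s'' \<in> S" for s''
      using contr.N_nonneg[OF cy] PT_nn[OF xy] that s by blast
    have d1: "NN (x(i := detp i f')) s s \<ge> 1" using contr.N_diag[OF cy] PT_nn[OF xy] s by blast
    have "\<Phi> f' - \<Phi> fs = (\<Sum>s''\<in>S. NN (x(i := detp i f')) s'' s * (Q s b - Q s (fs s)))"
      unfolding \<Phi>_def using diff by (simp add: sum_subtractf[symmetric] xs_def ys_def)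
    also have "\<dots> \<ge> NN (x(i := detp i f')) s s * (Q s b - Q s (fs s))"
      by (rule member_le_sum[OF s]) (use nn gt finS in auto)
    finally have "\<Phi> f' - \<Phi> fs \<ge> NN (x(i := detp i f')) s s * (Q s b - Q s (fs s))" .
    moreover have "NN (x(i := detp i f')) s s * (Q s b - Q s (fs s)) > 0" using d1 gt by simp
    ultimately show False using fmax[OF f'] by linarith
  qed
  have best: "Vrho G (x(i := y)) i \<le> Vrho G (x(i := ys)) i" if y: "pol_i G i y" for y
  proof -
    have xy: "x(i := y) \<in> polX G" by (rule polX_upd2[OF x y i])
    note cy = contr_polX[OF xy]
    have inner: "(\<Sum>b\<in>A i. (y s' b - ys s' b) * Q s' b) \<le> 0" if s': "s' \<in> S" for s'
    proof -
      have "(\<Sum>b\<in>A i. y s' b * Q s' b) \<le> (\<Sum>b\<in>A i. y s' b * Q s' (fs s'))"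
        using y s' greedy unfolding pol_i_def by (intro sum_mono mult_left_mono) auto
      also have "\<dots> = Q s' (fs s')" using y s' unfolding pol_i_def by (simp add: sum_distrib_right[symmetric])
      also have "\<dots> = (\<Sum>b\<in>A i. ys s' b * Q s' b)"
        unfolding ys_def using detp_sum[OF i fs[unfolded D_def] s'] by simp
      finally show ?thesis by (simp add: left_diff_distrib sum_subtractf)
    qed
    have pt: "Val G (x(i := y)) i s \<le> Val G xs i s" if s: "s \<in> S" for s
    proof -
      have "(\<Sum>s'\<in>S. NN (x(i := y)) s s' * (\<Sum>b\<in>A i. (y s' b - ys s' b) * Q s' b)) \<le> 0"
        by (intro sum_nonpos mult_nonneg_nonpos inner) (use contr.N_nonneg[OF cy] PT_nn[OF xy] s in blast)
      then show ?thesis using PDs[OF y s] by linarith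
    qed
    show ?thesis unfolding Vrho_def xs_def[symmetric]
      by (intro sum_mono mult_left_mono pt) (use rho_pos in \<open>auto simp: less_imp_le\<close>)
  qed
  show ?thesis using ysp best by blast
qed

lemma BRset_ne: "x \<in> polX G \<Longrightarrow> i < n \<Longrightarrow> BRset G x i \<noteq> {}"
proof -
  assume x: "x \<in> polX G" and i: "i < n"
  obtain y where y: "pol_i G i y" and best: "\<forall>y'. pol_i G i y' \<longrightarrow> Vrho G (x(i := y')) i \<le> Vrho G (x(i := y)) i"
    using br_exists[OF x i] by (elim exE conjE)
  have eq: "BRval G x i = Vrho G (x(i := y)) i"
    unfolding BRval_def
  proof (rule cSup_eq_maximum)
    show "Vrho G (x(i := y)) i \<in> (\<lambda>y. Vrho G (x(i := y)) i) ` {y. pol_i G i y}" using y by (intro imageI CollectI)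
    fix z assume "z \<in> (\<lambda>y. Vrho G (x(i := y)) i) ` {y. pol_i G i y}"
    then obtain y' where y': "pol_i G i y'" and z: "z = Vrho G (x(i := y')) i" by (elim imageE CollectE)
    show "z \<le> Vrho G (x(i := y)) i" unfolding z using best y' by (elim allE impE)
  qed
  have "y \<in> BRset G x i" unfolding BRset_def using y eq by (intro CollectI conjI) simp_all
  then show ?thesis by (intro notI) simp
qed

lemma ratio_bounds:
  assumes z: "z \<in> polX G"
  shows "0 \<le> Max ((\<lambda>s. dnorm G z s / \<rho> s) ` S)" "Max ((\<lambda>s. dnorm G z s / \<rho> s) ` S) \<le> 1 / mu"
proof -
  have tot: "(\<Sum>s\<in>S. dvis G z s) > 0"
    by (rule sum_pos[OF finS S_ne]) (rule dvis_pos[OF z])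
  have dn: "0 \<le> dnorm G z s" "dnorm G z s \<le> 1" if s: "s \<in> S" for s
  proof -
    show "0 \<le> dnorm G z s" unfolding dnorm_def using dvis_nn[OF z s] tot by simp
    have "dvis G z s \<le> (\<Sum>s\<in>S. dvis G z s)" by (rule member_le_sum[OF s]) (use dvis_nn[OF z] finS in auto)
    then show "dnorm G z s \<le> 1" unfolding dnorm_def using tot by simp
  qed
  obtain s0 where s0: "s0 \<in> S" using S_ne by blast
  have "0 \<le> dnorm G z s0 / \<rho> s0" using dn(1)[OF s0] rho_pos[OF s0] by simp
  also have "\<dots> \<le> Max ((\<lambda>s. dnorm G z s / \<rho> s) ` S)" by (rule Max_ge[OF finite_imageI[OF finS] imageI[OF s0]])
  finally show "0 \<le> Max ((\<lambda>s. dnorm G z s / \<rho> s) ` S)" .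
  have "dnorm G z s / \<rho> s \<le> 1 / mu" if s: "s \<in> S" for s
  proof -
    have "dnorm G z s / \<rho> s \<le> 1 / \<rho> s" by (rule divide_right_mono[OF dn(2)[OF s]]) (use rho_pos[OF s] in simp)
    also have "\<dots> \<le> 1 / mu" by (rule divide_left_mono[OF mu_le[OF s]]) (use mu_pos rho_pos[OF s] in auto)
    finally show ?thesis .
  qed
  then show "Max ((\<lambda>s. dnorm G z s / \<rho> s) ` S) \<le> 1 / mu"
    by (subst Max_le_iff[OF finite_imageI[OF finS]]) (use S_ne in blast, blast)
qed

lemma mismatch_nn: "mismatch G \<ge> 0"
proof -
  define M where "M = {Inf {Max ((\<lambda>s. dnorm G (x(i := y)) s / init G s) ` states G) | y. y \<in> BRset G x i}
                     | i x. i < nplayers G \<and> x \<in> polX G}"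
  have elem: "0 \<le> m \<and> m \<le> 1 / mu" if "m \<in> M" for m
  proof -
    obtain i x where i: "i < n" and x: "x \<in> polX G" and m: "m = Inf {Max ((\<lambda>s. dnorm G (x(i := y)) s / \<rho> s) ` S) | y. y \<in> BRset G x i}"
      using \<open>m \<in> M\<close> unfolding M_def by blast
    let ?B = "{Max ((\<lambda>s. dnorm G (x(i := y)) s / \<rho> s) ` S) | y. y \<in> BRset G x i}"
    have inB: "0 \<le> v \<and> v \<le> 1 / mu" if "v \<in> ?B" for v
    proof -
      obtain y where y: "y \<in> BRset G x i" and v: "v = Max ((\<lambda>s. dnorm G (x(i := y)) s / \<rho> s) ` S)" using \<open>v \<in> ?B\<close> by blast
      have "x(i := y) \<in> polX G" using y polX_upd2[OF x _ i] unfolding BRset_def by blast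
      then show ?thesis using ratio_bounds v by simp
    qed
    have neB: "?B \<noteq> {}" using BRset_ne[OF x i] by blast
    have "0 \<le> Inf ?B" using neB inB by (intro cInf_greatest) auto
    moreover have "Inf ?B \<le> 1 / mu"
    proof -
      obtain v where v: "v \<in> ?B" using neB by blast
      have "Inf ?B \<le> v" by (rule cInf_lower[OF v]) (use inB in \<open>auto simp: bdd_below_def\<close>)
      then show ?thesis using inB[OF v] by linarith
    qed
    ultimately show ?thesis using m by simp
  qed
  obtain x where x: "x \<in> polX G"
  proof -
    have "pj (\<lambda>_ _ _. 0) \<in> polX G" by (rule pj_polX)
    then show ?thesis using that by blast
  qed
  have "Inf {Max ((\<lambda>s. dnorm G (x(0 := y)) s / init G s) ` states G) | y. y \<in> BRset G x 0} \<in> M"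
    unfolding M_def by (rule CollectI, rule exI[of _ 0], rule exI[of _ x]) (use x n1 in simp)
  then have neM: "M \<noteq> {}" by blast
  obtain m where m: "m \<in> M" using neM by blast
  have "0 \<le> m" using elem[OF m] by simp
  also have "m \<le> Sup M" by (rule cSup_upper[OF m]) (use elem in \<open>auto simp: bdd_above_def\<close>)
  finally show ?thesis unfolding mismatch_def M_def by simp
qed

end


lemma pid: "(137 * (P * P * P^13))^2 * (8 * P^4) = 150152 * (P::real)^34" by algebra

theorem theorem3:
  "\<exists>(C::real) (k::nat). C > 0 \<and>
     (\<forall>(G::('s, 'a) mgame) c. wf_game G \<longrightarrow> single_controller G c \<longrightarrow> regret_condition G \<longrightarrow>
        (\<forall>\<epsilon>>0. \<exists>\<eta>>0. \<forall>x0\<in>polX G.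
           \<exists>t::nat. 1 \<le> t \<and> real t \<le> of_int \<lceil>C * game_size G ^ k / \<epsilon>\<^sup>2\<rceil> \<and>
             is_eps_NE G \<epsilon> (fst (rogd G c \<eta> x0 t))))"
proof (rule exI[of _ "150152::real"], rule exI[of _ "34::nat"], rule conjI)
  show "(150152::real) > 0" by simp
  show "\<forall>(G::('s, 'a) mgame) c. wf_game G \<longrightarrow> single_controller G c \<longrightarrow> regret_condition G \<longrightarrow>
        (\<forall>\<epsilon>>0. \<exists>\<eta>>0. \<forall>x0\<in>polX G.
           \<exists>t::nat. 1 \<le> t \<and> real t \<le> of_int \<lceil>150152 * game_size G ^ 34 / \<epsilon>\<^sup>2\<rceil> \<and>
             is_eps_NE G \<epsilon> (fst (rogd G c \<eta> x0 t)))"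
  proof (intro allI impI)
  fix G :: "('s, 'a) mgame" and c and \<epsilon> :: real
  assume wf: "wf_game G" and sc: "single_controller G c" and reg: "regret_condition G" and \<epsilon>: "\<epsilon> > 0"
  interpret mg G by unfold_locales (rule wf)
  define P where "P = game_size G"
  have mm: "mismatch G \<ge> 0" by (rule mismatch_nn)
  have Kmax_eq: "real (\<Sum>i<n. card (A i)) = Kmax" unfolding Kmax_def by simp
  have mu_eq: "Min (init G ` states G) = mu" unfolding mu_def by simp
  have P_def': "P = real n + Kmax + real (card S) + 1 / \<zeta> + mismatch G + 1 / mu"
    unfolding P_def game_size_def Kmax_eq mu_eq by simp
  have iz: "1 / \<zeta> > 0" using zeta_pos by simp
  have imu: "1 / mu > 0" using mu_pos by simp
  have P_ge: "real n \<le> P" "Kmax \<le> P" "real (card S) \<le> P" "1 / \<zeta> \<le> P" "1 / mu \<le> P"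
    unfolding P_def' using Kmax_nn iz imu mm by auto
  have P1: "1 \<le> P" using P_ge(1) n1 by linarith
  have Kmax1: "1 \<le> Kmax"
  proof -
    have "card (A 0) \<ge> 1" using finA[of 0] A_ne[of 0] n1 by (simp add: Suc_le_eq card_gt_0_iff)
    then show ?thesis using cardA_le[of 0] n1 by linarith
  qed
  have cS: "real (card S) \<ge> 1" using finS S_ne by (simp add: Suc_le_eq card_gt_0_iff)
  define \<eta> where "\<eta> = mu * \<zeta> / (4 * (Lsq + 1))"
  have Lnn: "Lsq \<ge> 0" unfolding Lsq_def Kv_def using Kmax_nn zeta_pos by (intro divide_nonneg_pos mult_nonneg_nonneg) auto
  have eta_pos: "\<eta> > 0" unfolding \<eta>_def using mu_pos zeta_pos Lnn by simp
  have h\<eta>: "2 * \<eta>^2 * (1/\<zeta>) * Lsq \<le> mu / 8"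
  proof -
    have e: "2 * \<eta>^2 * (1/\<zeta>) * Lsq = mu / 8 * (mu * \<zeta> * Lsq / (Lsq + 1)^2)"
    proof -
      have L1: "Lsq + 1 \<noteq> 0" "(Lsq + 1)^2 \<noteq> 0" using Lnn by auto
      have "\<eta>^2 = mu^2 * \<zeta>^2 / (16 * (Lsq + 1)^2)" unfolding \<eta>_def by (simp add: power_divide power_mult_distrib) (simp add: power2_eq_square algebra_simps)
      then have "2 * \<eta>^2 * (1/\<zeta>) * Lsq = 2 * (mu^2 * \<zeta>^2 / (16 * (Lsq + 1)^2)) * (1/\<zeta>) * Lsq" by simp
      also have "\<dots> = mu / 8 * (mu * \<zeta> * Lsq / (Lsq + 1)^2)" using zeta_pos L1 by (simp add: field_simps power2_eq_square)
      finally show ?thesis .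
    qed
    have "mu * \<zeta> \<le> 1" using mu_le1 zeta_le1 mu_pos zeta_pos by (simp add: mult_le_one)
    then have "mu * \<zeta> * Lsq \<le> 1 * Lsq" using Lnn by (intro mult_right_mono) auto
    then have "mu * \<zeta> * Lsq \<le> Lsq" by simp
    also have "Lsq \<le> (Lsq + 1)^2" using Lnn by (simp add: power2_eq_square algebra_simps)
    finally have "mu * \<zeta> * Lsq / (Lsq + 1)^2 \<le> 1" using Lnn by simp
    then have "mu / 8 * (mu * \<zeta> * Lsq / (Lsq + 1)^2) \<le> mu / 8 * 1" using mu_pos by (intro mult_left_mono) auto
    then show ?thesis unfolding e by simp
  qed
  show "\<exists>\<eta>>0. \<forall>x0\<in>polX G. \<exists>t::nat. 1 \<le> t \<and> real t \<le> of_int \<lceil>150152 * game_size G ^ 34 / \<epsilon>\<^sup>2\<rceil> \<and>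
             is_eps_NE G \<epsilon> (fst (rogd G c \<eta> x0 t))"
  proof (intro exI[of _ \<eta>] conjI ballI eta_pos)
    fix x0 assume x0: "x0 \<in> polX G"
    interpret og G c \<eta> x0 by unfold_locales (auto simp: sc eta_pos x0)
    define C :: real where "C = 150152"
    define T where "T = nat \<lceil>C * P^34 / \<epsilon>^2\<rceil>"
    have CP: "C * P^34 / \<epsilon>^2 > 0" unfolding C_def using P1 \<epsilon> by simp
    have T1: "T \<ge> 1" unfolding T_def using CP by linarith
    have Tge: "real T \<ge> C * P^34 / \<epsilon>^2" unfolding T_def using CP by linarith
    have Tpos: "real T > 0" using T1 by simp
    define B where "B = 8 * (1/\<zeta>) * (real n * real (card S)) / mu"
    obtain t where t: "t < T" and \<delta>: "sqdist G (X (Suc t)) (Xh t) + sqdist G (Xh (Suc t)) (X (Suc t)) \<le> B / real T"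
      using good_t[OF T1 h\<eta> reg] unfolding B_def by blast
    define \<Gamma> where "\<Gamma> = 2 / \<eta> + sqrt Kmax / \<zeta>^2"
    define Mx where "Mx = real (card S) / \<zeta> * \<Gamma>"
    have NE: "is_eps_NE G (Mx * sqrt (B / real T)) (X (Suc t))"
      using ne_at[OF \<delta>] unfolding Mx_def \<Gamma>_def by (simp add: mult.assoc)
    have B_nn: "B \<ge> 0" unfolding B_def using zeta_pos mu_pos by simp
    have Bb: "B \<le> 8 * P^4"
    proof -
      have "B = 8 * ((1/\<zeta>) * real n * real (card S) * (1/mu))" unfolding B_def by simp
      also have "(1/\<zeta>) * real n * real (card S) * (1/mu) \<le> P * P * P * P"
        using P_ge zeta_pos mu_pos by (intro mult_mono) auto
      finally show ?thesis by (simp add: power4_eq_xxxx mult_ac)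
    qed
    have Lb: "Lsq \<le> 16 * P^11"
    proof -
      have "Lsq = 16 * ((real (card S) * Kmax) * (real n * (real (card S) * Kmax)) * (1/\<zeta>)^6)"
        unfolding Lsq_def Kv_def by (simp add: power_one_over field_simps)
      also have "\<dots> \<le> 16 * ((P * P) * (P * (P * P)) * P^6)"
        using P_ge zeta_pos Kmax_nn by (intro mult_left_mono mult_mono power_mono) auto
      also have "\<dots> = 16 * P^11" by algebra
      finally show ?thesis .
    qed
    have ieb: "1 / \<eta> \<le> 68 * P^13"
    proof -
      have "1 / \<eta> = 4 * (Lsq + 1) * (1/mu) * (1/\<zeta>)" unfolding \<eta>_def using mu_pos zeta_pos by (simp add: field_simps)
      also have "\<dots> \<le> 4 * (17 * P^11) * P * P"
      proof -
        have "1 \<le> P^11" using P1 by simp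
        then have "Lsq + 1 \<le> 17 * P^11" using Lb by linarith
        then show ?thesis using P_ge Lnn mu_pos zeta_pos by (intro mult_mono) auto
      qed
      also have "\<dots> = 68 * P^13" by algebra
      finally show ?thesis .
    qed
    have sqb: "sqrt Kmax / \<zeta>^2 \<le> P^13"
    proof -
      have "sqrt Kmax \<le> Kmax" using Kmax1 by (simp add: real_sqrt_le_iff' power2_eq_square)
      then have s: "sqrt Kmax \<le> P" using P_ge by linarith
      have "sqrt Kmax / \<zeta>^2 = sqrt Kmax * (1/\<zeta>)^2" by (simp add: power_one_over)
      also have "\<dots> \<le> P * P^2" using s P_ge zeta_pos by (intro mult_mono power_mono) auto
      also have "\<dots> = P^3" by algebra
      also have "\<dots> \<le> P^13" using P1 by (intro power_increasing) auto
      finally show ?thesis .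
    qed
    have \<Gamma>b: "\<Gamma> \<le> 137 * P^13" unfolding \<Gamma>_def using ieb sqb by (simp add: divide_inverse) 
    have \<Gamma>nn: "\<Gamma> \<ge> 0" unfolding \<Gamma>_def using eta_pos zeta_pos Kmax_nn by (intro add_nonneg_nonneg divide_nonneg_pos) auto
    have Mxb: "Mx \<le> 137 * (P * P * P^13)"
    proof -
      have "Mx = real (card S) * (1/\<zeta>) * \<Gamma>" unfolding Mx_def by simp
      also have "\<dots> \<le> P * P * (137 * P^13)" using P_ge \<Gamma>b \<Gamma>nn zeta_pos by (intro mult_mono) auto
      finally show ?thesis by simp
    qed
    have Mxnn: "Mx \<ge> 0" unfolding Mx_def using \<Gamma>nn zeta_pos by simp
    have "Mx^2 * B \<le> (137 * (P * P * P^13))^2 * (8 * P^4)"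
      using Mxb Bb Mxnn B_nn by (intro mult_mono power_mono) auto
    also have "\<dots> = C * P^34" unfolding C_def by (rule pid)
    finally have MB: "Mx^2 * B \<le> C * P^34" .
    have "Mx * sqrt (B / real T) = sqrt (Mx^2 * B / real T)"
      using Mxnn B_nn Tpos by (simp add: real_sqrt_mult real_sqrt_divide)
    also have "\<dots> \<le> sqrt (\<epsilon>^2)"
    proof (rule real_sqrt_le_mono)
      have "Mx^2 * B / real T \<le> C * P^34 / real T" using MB Tpos by (simp add: divide_right_mono)
      also have "\<dots> \<le> \<epsilon>^2" using Tge Tpos \<epsilon> CP by (simp add: field_simps)
      finally show "Mx^2 * B / real T \<le> \<epsilon>^2" .
    qed
    also have "\<dots> = \<epsilon>" using \<epsilon> by simp
    finally have le: "Mx * sqrt (B / real T) \<le> \<epsilon>" .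
    have NE': "is_eps_NE G \<epsilon> (X (Suc t))" using NE le unfolding is_eps_NE_def by force
    show "\<exists>t::nat. 1 \<le> t \<and> real t \<le> of_int \<lceil>150152 * game_size G ^ 34 / \<epsilon>\<^sup>2\<rceil> \<and> is_eps_NE G \<epsilon> (fst (rogd G c \<eta> x0 t))"
    proof (intro exI[of _ "Suc t"] conjI)
      show "1 \<le> Suc t" by simp
      have "real (Suc t) \<le> real T" using t by simp
      also have "real T = of_int \<lceil>C * P^34 / \<epsilon>^2\<rceil>" unfolding T_def using CP by simp
      finally show "real (Suc t) \<le> of_int \<lceil>150152 * game_size G ^ 34 / \<epsilon>\<^sup>2\<rceil>" unfolding C_def P_def .
      show "is_eps_NE G \<epsilon> (fst (rogd G c \<eta> x0 (Suc t)))" using NE' unfolding X_def .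
    qed
  qed
  qed
qed


end
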